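(* Let $d\ge 1$ and $f\in C^1([0,1]^d)$, and set $\mu=\int_{[0,1]^d}f(X)\,\mathrm{d}X$ and $$\sigma^2=\frac{1}{12}\int_{[0,1]^{d}}\Vert\nabla f(X)\Vert^{2}\,\mathrm{d} X.$$ Suppose $\sigma^2>0$. For an integer $m\ge 1$ let $n=m^d$, and let $\tilde{\mu}_n$ be the grid-based stratified estimate defined below. Then $$\frac{\tilde{\mu}_n-\mu}{\sigma n^{-1/2-1/d}}\to N(0,1)$$ in distribution as $n=m^d\to\infty$.
   Context: For an integer $m\ge 1$ and $n=m^d$, split $[0,1]^d$ into the $n$ congruent closed subcubes $E_1,\dots,E_n$ with sides of length $1/m$. The grid-based stratified estimate is $\tilde{\mu}_n=\frac1n\sum_{i=1}^n f(U_i)$, where $U_1,\dots,U_n$ are independent and $U_i$ is uniformly distributed on $E_i$. Here $\nabla f$ is the gradient of $f$ and $\Vert\cdot\Vert$ is the Euclidean norm. *)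

theory Defs
  imports "HOL-Probability.Probability"
begin

definition unit_cube :: "(real ^ 'n) set" where
  "unit_cube = cbox 0 1"

definition grid_index :: "nat \<Rightarrow> ('n::finite \<Rightarrow> nat) set" where
  "grid_index m = PiE UNIV (\<lambda>_. {..<m})"

definition grid_cell :: "nat \<Rightarrow> ('n::finite \<Rightarrow> nat) \<Rightarrow> (real ^ 'n) set" where
  "grid_cell m k = cbox (\<chi> i. real (k i) / real m) (\<chi> i. (real (k i) + 1) / real m)"

text \<open>f is only relevant on the unit cube; outside we set it to 0 (the sample points lie in the
  cube almost surely, so this does not change the estimator's law).\<close>
definition on_cube :: "(real ^ 'n \<Rightarrow> real) \<Rightarrow> real ^ 'n \<Rightarrow> real" where
  "on_cube f x = (if x \<in> unit_cube then f x else 0)"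

definition strat_sample :: "nat \<Rightarrow> (('n::finite \<Rightarrow> nat) \<Rightarrow> real ^ 'n) measure" where
  "strat_sample m = PiM (grid_index m) (\<lambda>k. uniform_measure lborel (grid_cell m k))"

definition strat_estimate ::
  "(real ^ 'n::finite \<Rightarrow> real) \<Rightarrow> nat \<Rightarrow> (('n \<Rightarrow> nat) \<Rightarrow> real ^ 'n) \<Rightarrow> real" where
  "strat_estimate f m U = (1 / real (m ^ CARD('n))) * (\<Sum>k\<in>grid_index m. on_cube f (U k))"

end

theory Submission
  imports Defs
begin

definition cell_center :: "nat \<Rightarrow> ('n::finite \<Rightarrow> nat) \<Rightarrow> real ^ 'n" where
  "cell_center m k = (\<chi> i. (real (k i) + 1/2) / real m)"

lemma mem_grid_cell:
  "x \<in> grid_cell m k \<longleftrightarrow> (\<forall>i. real (k i) / real m \<le> x$i \<and> x$i \<le> (real (k i) + 1) / real m)"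
  unfolding grid_cell_def mem_box_cart by simp

lemma mem_unit_cube: "x \<in> unit_cube \<longleftrightarrow> (\<forall>i. 0 \<le> x$i \<and> x$i \<le> 1)"
  unfolding unit_cube_def mem_box_cart by simp

lemma grid_index_iff: "k \<in> grid_index m \<longleftrightarrow> (\<forall>i. k i < m)"
  unfolding grid_index_def by (auto simp: PiE_iff extensional_def)

lemma finite_grid_index: "finite (grid_index m)"
  unfolding grid_index_def by (intro finite_PiE) auto

lemma card_grid_index: "card (grid_index m :: ('n::finite \<Rightarrow> nat) set) = m ^ CARD('n)"
  unfolding grid_index_def by (simp add: card_PiE)

lemma grid_cell_subset:
  assumes "m > 0" "k \<in> grid_index m"
  shows "grid_cell m k \<subseteq> unit_cube"
proof
  fix x assume x: "x \<in> grid_cell m k"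
  show "x \<in> unit_cube" unfolding mem_unit_cube
  proof
    fix i
    have "k i < m" using assms grid_index_iff by blast
    then have "real (k i) + 1 \<le> real m" by linarith
    then have "(real (k i) + 1) / real m \<le> 1" using assms by simp
    moreover have "0 \<le> real (k i) / real m" by simp
    ultimately show "0 \<le> x$i \<and> x$i \<le> 1" using x[unfolded mem_grid_cell] by (meson order_trans)
  qed
qed

lemma cell_center_in:
  assumes "m > 0" shows "cell_center m k \<in> grid_cell m k"
  using assms unfolding mem_grid_cell cell_center_def by (auto simp: divide_right_mono)

lemma cell_coord_dist:
  assumes "m > 0" "x \<in> grid_cell m k"
  shows "\<bar>x$i - cell_center m k $ i\<bar> \<le> 1 / (2 * real m)"
proof -
  have "real (k i) / real m \<le> x$i" "x$i \<le> (real (k i) + 1) / real m"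
    using assms(2) mem_grid_cell by blast+
  then show ?thesis using assms(1) unfolding cell_center_def
    by (auto simp: field_simps abs_le_iff)
qed

lemma cell_dist_center:
  fixes k :: "'n::finite \<Rightarrow> nat"
  assumes "m > 0" "x \<in> grid_cell m k"
  shows "norm (x - cell_center m k) \<le> real CARD('n) / real m"
proof -
  have "norm (x - cell_center m k) \<le> (\<Sum>i\<in>UNIV. \<bar>(x - cell_center m k)$i\<bar>)"
    by (rule norm_le_l1_cart)
  also have "\<dots> \<le> (\<Sum>i\<in>(UNIV::'n set). 1 / real m)"
  proof (rule sum_mono)
    fix i
    have "\<bar>x$i - cell_center m k $ i\<bar> \<le> 1 / (2 * real m)" by (rule cell_coord_dist[OF assms])
    also have "\<dots> \<le> 1 / real m" using assms(1) by (simp add: field_simps)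
    finally show "\<bar>(x - cell_center m k)$i\<bar> \<le> 1 / real m" by simp
  qed
  also have "\<dots> = real CARD('n) / real m" by simp
  finally show ?thesis .
qed

lemma cell_dist:
  fixes k :: "'n::finite \<Rightarrow> nat"
  assumes "m > 0" "x \<in> grid_cell m k" "y \<in> grid_cell m k"
  shows "norm (x - y) \<le> real CARD('n) / real m"
proof -
  have "norm (x - y) \<le> (\<Sum>i\<in>UNIV. \<bar>(x - y)$i\<bar>)"
    by (rule norm_le_l1_cart)
  also have "\<dots> \<le> (\<Sum>i\<in>(UNIV::'n set). 1 / real m)"
  proof (rule sum_mono)
    fix i
    have "\<bar>x$i - cell_center m k $ i\<bar> \<le> 1 / (2 * real m)" "\<bar>y$i - cell_center m k $ i\<bar> \<le> 1 / (2 * real m)"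
      by (rule cell_coord_dist[OF assms(1)], fact)+
    then show "\<bar>(x - y)$i\<bar> \<le> 1 / real m" by (simp add: abs_le_iff field_simps)
  qed
  also have "\<dots> = real CARD('n) / real m" by simp
  finally show ?thesis .
qed

lemma union_grid_cells:
  assumes "m > 0"
  shows "\<Union> (grid_cell m ` grid_index m) = (unit_cube :: (real^'n::finite) set)"
proof
  show "\<Union> (grid_cell m ` grid_index m) \<subseteq> (unit_cube :: (real^'n::finite) set)"
    using grid_cell_subset[OF assms] by blast
next
  show "unit_cube \<subseteq> \<Union> (grid_cell m ` grid_index m :: (real^'n) set set)"
  proof
    fix x :: "real^'n" assume x: "x \<in> unit_cube"
    define k where "k i = min (m - 1) (nat \<lfloor>real m * x$i\<rfloor>)" for i
    have "k \<in> grid_index m" unfolding grid_index_iff k_def using assms by auto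
    moreover have "x \<in> grid_cell m k" unfolding mem_grid_cell
    proof
      fix i
      have x01: "0 \<le> x$i" "x$i \<le> 1" using x mem_unit_cube by blast+
      have fl0: "0 \<le> \<lfloor>real m * x$i\<rfloor>" using x01 by simp
      have "real (k i) \<le> real m * x$i"
      proof -
        have "real (k i) \<le> real (nat \<lfloor>real m * x$i\<rfloor>)" unfolding k_def by simp
        also have "\<dots> = of_int \<lfloor>real m * x$i\<rfloor>" using fl0 by simp
        also have "\<dots> \<le> real m * x$i" by simp
        finally show ?thesis .
      qed
      moreover have "real m * x$i \<le> real (k i) + 1"
      proof (cases "nat \<lfloor>real m * x$i\<rfloor> \<le> m - 1")
        case True
        then have "k i = nat \<lfloor>real m * x$i\<rfloor>" unfolding k_def by simp
        then have "real (k i) = of_int \<lfloor>real m * x$i\<rfloor>" using fl0 by simp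
        then show ?thesis by linarith
      next
        case False
        then have "k i = m - 1" unfolding k_def by simp
        then have "real (k i) + 1 = real m" using assms by simp
        moreover have "real m * x$i \<le> real m" using x01 by (simp add: mult_left_le)
        ultimately show ?thesis by simp
      qed
      ultimately show "real (k i) / real m \<le> x$i \<and> x$i \<le> (real (k i) + 1) / real m"
        using assms by (simp add: field_simps)
    qed
    ultimately show "x \<in> \<Union> (grid_cell m ` grid_index m)" by blast
  qed
qed

lemma negligible_hyperplane_cart: "negligible {x::real^'n::finite. x$i = c}"
proof -
  have "negligible {x::real^'n. x \<bullet> axis i 1 = c}"
    by (rule negligible_standard_hyperplane) simp
  moreover have "{x::real^'n. x$i = c} = {x::real^'n. x \<bullet> axis i 1 = c}"
    by (auto simp: cart_eq_inner_axis)
  ultimately show ?thesis by simp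
qed

lemma grid_cell_inter_negligible:
  assumes "m > 0" "k \<noteq> k'"
  shows "negligible (grid_cell m k \<inter> grid_cell m k')"
proof -
  obtain i where i: "k i \<noteq> k' i" using assms(2) by blast
  show ?thesis
  proof (cases "k i < k' i")
    case True
    have "grid_cell m k \<inter> grid_cell m k' \<subseteq> {x. x$i = real (k' i) / real m}"
    proof
      fix x assume "x \<in> grid_cell m k \<inter> grid_cell m k'"
      then have "x \<in> grid_cell m k" "x \<in> grid_cell m k'" by auto
      then have a: "x$i \<le> (real (k i) + 1) / real m" "real (k' i) / real m \<le> x$i"
        using mem_grid_cell[THEN iffD1, rule_format] by blast+
      have "real (k i) + 1 \<le> real (k' i)" using True by linarith
      then have "(real (k i) + 1) / real m \<le> real (k' i) / real m" using assms(1) by (simp add: divide_right_mono)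
      then show "x \<in> {x. x$i = real (k' i) / real m}" using a by simp
    qed
    then show ?thesis by (rule negligible_subset[OF negligible_hyperplane_cart])
  next
    case False
    then have F: "k' i < k i" using i by linarith
    have "grid_cell m k \<inter> grid_cell m k' \<subseteq> {x. x$i = real (k i) / real m}"
    proof
      fix x assume "x \<in> grid_cell m k \<inter> grid_cell m k'"
      then have "x \<in> grid_cell m k" "x \<in> grid_cell m k'" by auto
      then have a: "x$i \<le> (real (k' i) + 1) / real m" "real (k i) / real m \<le> x$i"
        using mem_grid_cell[THEN iffD1, rule_format] by blast+
      have "real (k' i) + 1 \<le> real (k i)" using F by linarith
      then have "(real (k' i) + 1) / real m \<le> real (k i) / real m" using assms(1) by (simp add: divide_right_mono)
      then show "x \<in> {x. x$i = real (k i) / real m}" using a by simp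
    qed
    then show ?thesis by (rule negligible_subset[OF negligible_hyperplane_cart])
  qed
qed

lemma grid_cell_inj:
  assumes "m > 0" shows "inj_on (grid_cell m) (grid_index m)"
proof (rule inj_onI)
  fix k k' assume "k \<in> grid_index m" "k' \<in> grid_index m" "grid_cell m k = grid_cell m k'"
  then have "cell_center m k \<in> grid_cell m k'" using cell_center_in[OF assms] by metis
  then have *: "\<forall>i. \<bar>cell_center m k $ i - cell_center m k' $ i\<bar> \<le> 1 / (2 * real m)"
    using cell_coord_dist[OF assms] by blast
  have "k i = k' i" for i
  proof -
    have h: "\<bar>cell_center m k $ i - cell_center m k' $ i\<bar> \<le> 1 / (2 * real m)" using * by blast
    have "cell_center m k $ i - cell_center m k' $ i = (real (k i) - real (k' i)) / real m"
      unfolding cell_center_def by (simp add: diff_divide_distrib[symmetric])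
    with h have "\<bar>real (k i) - real (k' i)\<bar> / real m \<le> 1 / (2 * real m)" by simp
    then have "\<bar>real (k i) - real (k' i)\<bar> \<le> 1/2" using assms by (simp add: field_simps)
    show ?thesis
    proof (rule ccontr)
      assume "k i \<noteq> k' i"
      then have "k i + 1 \<le> k' i \<or> k' i + 1 \<le> k i" by linarith
      then have "real (k i) + 1 \<le> real (k' i) \<or> real (k' i) + 1 \<le> real (k i)"
        using of_nat_le_iff[of "k i + 1" "k' i", where 'a=real] of_nat_le_iff[of "k' i + 1" "k i", where 'a=real]
        by auto
      then show False using \<open>\<bar>real (k i) - real (k' i)\<bar> \<le> 1/2\<close> by linarith
    qed
  qed
  then show "k = k'" by blast
qed

lemma content_grid_cell:
  assumes "m > 0"
  shows "measure lborel (grid_cell m (k::'n::finite \<Rightarrow> nat)) = 1 / real m ^ CARD('n)"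
proof -
  have ne: "grid_cell m k \<noteq> {}" using cell_center_in[OF assms] by blast
  have "measure lborel (grid_cell m k) = (\<Prod>i\<in>(UNIV::'n set). (real (k i) + 1) / real m - real (k i) / real m)"
    using ne unfolding grid_cell_def by (simp add: content_cbox_cart)
  also have "\<dots> = (\<Prod>i\<in>(UNIV::'n set). 1 / real m)"
    by (intro prod.cong) (auto simp: diff_divide_distrib[symmetric])
  finally show ?thesis by (simp add: power_one_over)
qed

lemma emeasure_grid_cell:
  assumes "m > 0"
  shows "emeasure lborel (grid_cell m (k::'n::finite \<Rightarrow> nat)) = ennreal (1 / real m ^ CARD('n))"
  using content_grid_cell[OF assms, of k] unfolding grid_cell_def
  using assms by (auto simp: emeasure_lborel_cbox_eq content_cbox_cases inner_diff_left split: if_splits)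

lemma integral_lborel_prod:
  fixes f :: "'a::euclidean_space \<Rightarrow> real \<Rightarrow> real"
  assumes [measurable]: "\<And>b. b \<in> Basis \<Longrightarrow> f b \<in> borel_measurable borel"
    and int: "\<And>b. b \<in> Basis \<Longrightarrow> integrable lborel (f b)"
  shows "(LINT x|lborel. (\<Prod>b\<in>Basis. f b (x \<bullet> b))) = (\<Prod>b\<in>Basis. LINT x|lborel. f b x)"
proof -
  interpret product_sigma_finite "\<lambda>_::'a. lborel::real measure"
    by standard
  have "(LINT x|lborel. (\<Prod>b\<in>Basis. f b (x \<bullet> b))) =
      (LINT y|Pi\<^sub>M Basis (\<lambda>_. lborel). (\<Prod>b\<in>Basis. f b ((\<Sum>b'\<in>Basis. y b' *\<^sub>R b') \<bullet> b)))"
    by (subst lborel_eq) (subst integral_distr; simp)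
  also have "\<dots> = (LINT y|Pi\<^sub>M Basis (\<lambda>_. lborel). (\<Prod>b\<in>Basis. f b (y b)))"
  proof (rule Bochner_Integration.integral_cong[OF refl])
    fix y :: "'a \<Rightarrow> real"
    have "(\<Sum>b'\<in>Basis. y b' *\<^sub>R b') \<bullet> b = y b" if "b \<in> Basis" for b
      using that by (simp add: inner_sum_left inner_Basis if_distrib sum.delta cong: if_cong)
    then show "(\<Prod>b\<in>Basis. f b ((\<Sum>b'\<in>Basis. y b' *\<^sub>R b') \<bullet> b)) = (\<Prod>b\<in>Basis. f b (y b))"
      by (intro prod.cong) auto
  qed
  also have "\<dots> = (\<Prod>b\<in>Basis. LINT x|lborel. f b x)"
    by (rule product_integral_prod) (auto intro: int)
  finally show ?thesis .
qed

lemma Basis_cart_eq: "(Basis :: (real^'n::finite) set) = range (\<lambda>i. axis i 1)"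
  by (auto simp: Basis_vec_def)

lemma inj_axis1: "inj (\<lambda>i::'n::finite. axis i (1::real))"
  by (auto intro!: injI simp: axis_eq_axis)

lemma integral_cart_box_prod:
  fixes G :: "'n::finite \<Rightarrow> real \<Rightarrow> real" and l u :: "real^'n"
  assumes cont: "\<And>i. continuous_on UNIV (G i)"
  shows "(LINT x|lborel. indicator (cbox l u) x * (\<Prod>i\<in>UNIV. G i (x$i))) =
         (\<Prod>i\<in>UNIV. LINT t|lborel. G i t * indicator {l$i..u$i} t)"
proof -
  define inv_ax where "inv_ax = inv_into UNIV (\<lambda>i::'n. axis i (1::real))"
  have inv1: "inv_ax (axis i 1) = i" for i
    unfolding inv_ax_def by (rule inv_into_f_f[OF inj_axis1]) simp
  define f where "f b t = G (inv_ax b) t * indicator {l \<bullet> b..u \<bullet> b} t" for b :: "real^'n" and t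
  have [measurable]: "G i \<in> borel_measurable borel" for i
    using cont by (rule borel_measurable_continuous_onI)
  have meas[measurable]: "f b \<in> borel_measurable borel" for b
    unfolding f_def by measurable
  have int: "integrable lborel (f b)" for b
    unfolding f_def using cont
    by (intro borel_integrable_atLeastAtMost) (metis continuous_on_eq_continuous_at open_UNIV UNIV_I)
  have ind: "indicator (cbox l u) x = (\<Prod>i\<in>UNIV. indicator {l$i..u$i} (x$i) :: real)" for x :: "real^'n"
  proof (cases "x \<in> cbox l u")
    case True
    then show ?thesis by (simp add: mem_box_cart indicator_def)
  next
    case False
    then obtain i where "\<not> (l$i \<le> x$i \<and> x$i \<le> u$i)" by (auto simp: mem_box_cart)
    then have "indicator {l$i..u$i} (x$i) = (0::real)" by simp
    then have "(\<Prod>i\<in>UNIV. indicator {l$i..u$i} (x$i) :: real) = 0"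
      by (intro prod_zero) auto
    then show ?thesis using False by simp
  qed
  have "(\<lambda>x. indicator (cbox l u) x * (\<Prod>i\<in>UNIV. G i (x$i))) = (\<lambda>x::real^'n. \<Prod>b\<in>Basis. f b (x \<bullet> b))"
  proof
    fix x :: "real^'n"
    have "(\<Prod>b\<in>Basis. f b (x \<bullet> b)) = (\<Prod>i\<in>UNIV. f (axis i 1) (x \<bullet> axis i 1))"
      unfolding Basis_cart_eq by (subst prod.reindex[OF inj_axis1]) simp
    also have "\<dots> = (\<Prod>i\<in>UNIV. G i (x$i) * indicator {l$i..u$i} (x$i))"
      unfolding f_def by (simp add: inv1 cart_eq_inner_axis)
    also have "\<dots> = indicator (cbox l u) x * (\<Prod>i\<in>UNIV. G i (x$i))"
      by (simp add: prod.distrib ind)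
    finally show "indicator (cbox l u) x * (\<Prod>i\<in>UNIV. G i (x$i)) = (\<Prod>b\<in>Basis. f b (x \<bullet> b))" ..
  qed
  then have "(LINT x|lborel. indicator (cbox l u) x * (\<Prod>i\<in>UNIV. G i (x$i))) = (\<Prod>b\<in>Basis. LINT t|lborel. f b t)"
    using integral_lborel_prod[of f, OF meas int] by simp
  also have "\<dots> = (\<Prod>i\<in>UNIV. LINT t|lborel. f (axis i 1) t)"
    unfolding Basis_cart_eq by (subst prod.reindex[OF inj_axis1]) simp
  also have "\<dots> = (\<Prod>i\<in>UNIV. LINT t|lborel. G i t * indicator {l$i..u$i} t)"
    unfolding f_def by (simp add: inv1 cart_eq_inner_axis)
  finally show ?thesis .
qed

lemma integral_uniform_measure_lborel:
  fixes A :: "'a::euclidean_space set"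
  assumes A: "A \<in> sets borel" and v: "emeasure lborel A = ennreal v" "0 < v"
    and phi[measurable]: "\<phi> \<in> borel_measurable borel"
  shows "integral\<^sup>L (uniform_measure lborel A) \<phi> = (LINT x|lborel. indicator A x * \<phi> x) / v"
proof -
  have "(\<lambda>x. indicator A x / emeasure lborel A) = (\<lambda>x. ennreal (indicator A x / v))"
    using v by (auto simp: indicator_def fun_eq_iff intro: divide_ennreal[of 1 v, simplified])
  then have "uniform_measure lborel A = density lborel (\<lambda>x. ennreal (indicator A x / v))"
    unfolding uniform_measure_def by simp
  then have "integral\<^sup>L (uniform_measure lborel A) \<phi> = (LINT x|lborel. (indicator A x / v) *\<^sub>R \<phi> x)"
    using A v by (simp add: integral_density)
  also have "\<dots> = (LINT x|lborel. (1/v) * (indicator A x * \<phi> x))"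
    by simp
  also have "\<dots> = (LINT x|lborel. indicator A x * \<phi> x) / v"
    by simp
  finally show ?thesis .
qed

lemma grid_cell_borel[measurable]: "grid_cell m k \<in> sets borel"
  unfolding grid_cell_def by simp

lemma cell_integral:
  fixes k :: "'n::finite \<Rightarrow> nat"
  assumes m: "m > 0" and [measurable]: "\<phi> \<in> borel_measurable borel"
  shows "integral\<^sup>L (uniform_measure lborel (grid_cell m k)) \<phi> =
         real m ^ CARD('n) * (LINT x|lborel. indicator (grid_cell m k) x * \<phi> x)"
proof -
  have "integral\<^sup>L (uniform_measure lborel (grid_cell m k)) \<phi> =
      (LINT x|lborel. indicator (grid_cell m k) x * \<phi> x) / (1 / real m ^ CARD('n))"
    by (rule integral_uniform_measure_lborel) (use m emeasure_grid_cell in auto)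
  then show ?thesis by simp
qed

lemma int_Icc_1:
  fixes a b :: real assumes "a \<le> b"
  shows "(LINT t|lborel. 1 * indicator {a..b} t) = b - a"
proof -
  have "(LINT t|lborel. indicator {a..b} t *\<^sub>R (1::real)) = b - a"
    by (rule integral_FTC_atLeastAtMost[where F="\<lambda>t. t"])
       (auto simp flip: has_real_derivative_iff_has_vector_derivative intro!: derivative_eq_intros assms continuous_intros)
  then show ?thesis by (simp add: mult.commute)
qed

lemma int_Icc_lin:
  fixes a b :: real assumes "a \<le> b"
  shows "(LINT t|lborel. (t - (a+b)/2) * indicator {a..b} t) = 0"
proof -
  have "(LINT t|lborel. indicator {a..b} t *\<^sub>R (t - (a+b)/2)) = (b - (a+b)/2)^2/2 - (a - (a+b)/2)^2/2"
    by (rule integral_FTC_atLeastAtMost[where F="\<lambda>t. (t - (a+b)/2)^2/2"])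
       (auto simp flip: has_real_derivative_iff_has_vector_derivative intro!: derivative_eq_intros assms continuous_intros)
  then have "(LINT t|lborel. (t - (a+b)/2) * indicator {a..b} t) = (b - (a+b)/2)^2/2 - (a - (a+b)/2)^2/2"
    by (simp add: mult.commute)
  also have "\<dots> = 0" by (simp add: field_simps power2_eq_square)
  finally show ?thesis .
qed

lemma int_Icc_sq:
  fixes a b :: real assumes "a \<le> b"
  shows "(LINT t|lborel. ((t - (a+b)/2) * (t - (a+b)/2)) * indicator {a..b} t) = (b - a)^3/12"
proof -
  have "(LINT t|lborel. indicator {a..b} t *\<^sub>R ((t - (a+b)/2) * (t - (a+b)/2))) = (b - (a+b)/2)^3/3 - (a - (a+b)/2)^3/3"
    by (rule integral_FTC_atLeastAtMost[where F="\<lambda>t. (t - (a+b)/2)^3/3"])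
       (auto simp flip: has_real_derivative_iff_has_vector_derivative intro!: derivative_eq_intros assms continuous_intros simp: power2_eq_square)
  then have "(LINT t|lborel. ((t - (a+b)/2) * (t - (a+b)/2)) * indicator {a..b} t) = (b - (a+b)/2)^3/3 - (a - (a+b)/2)^3/3"
    by (simp add: mult.commute)
  also have "\<dots> = (b - a)^3/12" by (simp add: field_simps power3_eq_cube)
  finally show ?thesis .
qed

lemma cell_center_mid:
  "cell_center m k $ i = (real (k i) / real m + (real (k i) + 1) / real m) / 2"
  unfolding cell_center_def by (cases "m = 0") (simp_all add: field_simps)

lemma cell_moment2:
  fixes k :: "'n::finite \<Rightarrow> nat"
  assumes m: "m > 0"
  shows "integral\<^sup>L (uniform_measure lborel (grid_cell m k))
           (\<lambda>x. (x$i - cell_center m k $ i) * (x$j - cell_center m k $ j)) =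
         (if i = j then 1 / (12 * real m ^ 2) else 0)"
proof -
  let ?c = "cell_center m k"
  define lo :: "real^'n" where "lo = (\<chi> i. real (k i) / real m)"
  define hi :: "real^'n" where "hi = (\<chi> i. (real (k i) + 1) / real m)"
  have cellC: "grid_cell m k = cbox lo hi" unfolding grid_cell_def lo_def hi_def ..
  have le: "lo$l \<le> hi$l" for l unfolding lo_def hi_def using m by (simp add: divide_right_mono)
  have wid: "hi$l - lo$l = 1 / real m" for l unfolding lo_def hi_def by (simp add: diff_divide_distrib[symmetric])
  have cmid: "?c $ l = (lo$l + hi$l)/2" for l unfolding lo_def hi_def cell_center_mid by simp
  define G where "G l t = (if l = i then t - ?c$i else 1) * (if l = j then t - ?c$j else 1)" for l t
  have contG: "continuous_on UNIV (G l)" for l unfolding G_def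
    by (cases "l = i"; cases "l = j") (auto intro!: continuous_intros)
  have prodG: "(\<Prod>l\<in>UNIV. G l (x$l)) = (x$i - ?c$i) * (x$j - ?c$j)" for x :: "real^'n"
    unfolding G_def by (simp add: prod.distrib)
  have [measurable]: "(\<lambda>x::real^'n. (x$i - ?c$i) * (x$j - ?c$j)) \<in> borel_measurable borel"
    by measurable
  have intG: "(LINT t|lborel. G l t * indicator {lo$l..hi$l} t) =
      (if l = i \<and> l = j then (1 / real m)^3/12 else if l = i \<or> l = j then 0 else 1 / real m)" for l
  proof -
    consider "l = i" "l = j" | "l = i" "l \<noteq> j" | "l \<noteq> i" "l = j" | "l \<noteq> i" "l \<noteq> j" by blast
    then show ?thesis
    proof cases
      case 1 then show ?thesis using int_Icc_sq[OF le[of l]] by (simp add: G_def cmid wid)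
    next
      case 2 then show ?thesis using int_Icc_lin[OF le[of l]] by (simp add: G_def cmid)
    next
      case 3 then show ?thesis using int_Icc_lin[OF le[of l]] by (simp add: G_def cmid)
    next
      case 4 then show ?thesis using int_Icc_1[OF le[of l]] by (simp add: G_def wid)
    qed
  qed
  have "integral\<^sup>L (uniform_measure lborel (grid_cell m k)) (\<lambda>x. (x$i - ?c$i) * (x$j - ?c$j)) =
      real m ^ CARD('n) * (LINT x|lborel. indicator (cbox lo hi) x * (\<Prod>l\<in>UNIV. G l (x$l)))"
    by (subst cell_integral[OF m]) (simp_all add: prodG cellC)
  also have "\<dots> = real m ^ CARD('n) * (\<Prod>l\<in>UNIV. LINT t|lborel. G l t * indicator {lo$l..hi$l} t)"
    by (subst integral_cart_box_prod[OF contG]) simp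
  also have "\<dots> = (if i = j then 1 / (12 * real m ^ 2) else 0)"
  proof (cases "i = j")
    case True
    have "(\<Prod>l\<in>UNIV. LINT t|lborel. G l t * indicator {lo$l..hi$l} t) =
        (\<Prod>l\<in>UNIV. if l = i then (1 / real m)^3/12 else 1 / real m)"
      using True by (intro prod.cong) (auto simp: intG)
    also have "\<dots> = (1 / real m)^3/12 * (\<Prod>l\<in>UNIV - {i}. 1 / real m)"
      by (subst prod.remove[of UNIV i]) (auto intro!: prod.cong)
    also have "\<dots> = (1 / real m)^3/12 * (1 / real m) ^ (CARD('n) - 1)"
      by (simp add: card_Diff_singleton)
    finally have eq: "(\<Prod>l\<in>UNIV. LINT t|lborel. G l t * indicator {lo$l..hi$l} t) =
        (1 / real m)^3/12 * (1 / real m) ^ (CARD('n) - 1)" .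
    obtain d' where d': "CARD('n) = Suc d'" using finite_UNIV_card_ge_0[where 'a='n] by (cases "CARD('n)") auto
    show ?thesis using True m by (simp add: eq d' field_simps power_Suc power2_eq_square power3_eq_cube)
  next
    case False
    have "(\<Prod>l\<in>UNIV. LINT t|lborel. G l t * indicator {lo$l..hi$l} t) = 0"
      by (rule prod_zero) (use False in \<open>auto simp: intG\<close>)
    then show ?thesis using False by simp
  qed
  finally show ?thesis .
qed

lemma cell_moment1:
  fixes k :: "'n::finite \<Rightarrow> nat"
  assumes m: "m > 0"
  shows "integral\<^sup>L (uniform_measure lborel (grid_cell m k)) (\<lambda>x. x$i - cell_center m k $ i) = 0"
proof -
  let ?c = "cell_center m k"
  define lo :: "real^'n" where "lo = (\<chi> i. real (k i) / real m)"
  define hi :: "real^'n" where "hi = (\<chi> i. (real (k i) + 1) / real m)"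
  have cellC: "grid_cell m k = cbox lo hi" unfolding grid_cell_def lo_def hi_def ..
  have le: "lo$l \<le> hi$l" for l unfolding lo_def hi_def using m by (simp add: divide_right_mono)
  have cmid: "?c $ l = (lo$l + hi$l)/2" for l unfolding lo_def hi_def cell_center_mid by simp
  define G where "G l t = (if l = i then t - ?c$i else 1)" for l t
  have contG: "continuous_on UNIV (G l)" for l unfolding G_def
    by (cases "l = i") (auto intro!: continuous_intros)
  have prodG: "(\<Prod>l\<in>UNIV. G l (x$l)) = (x$i - ?c$i)" for x :: "real^'n"
    unfolding G_def by simp
  have "integral\<^sup>L (uniform_measure lborel (grid_cell m k)) (\<lambda>x. x$i - ?c$i) =
      real m ^ CARD('n) * (LINT x|lborel. indicator (cbox lo hi) x * (\<Prod>l\<in>UNIV. G l (x$l)))"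
    by (subst cell_integral[OF m]) (simp_all add: prodG cellC)
  also have "\<dots> = real m ^ CARD('n) * (\<Prod>l\<in>UNIV. LINT t|lborel. G l t * indicator {lo$l..hi$l} t)"
    by (subst integral_cart_box_prod[OF contG]) simp
  also have "(\<Prod>l\<in>UNIV. LINT t|lborel. G l t * indicator {lo$l..hi$l} t) = 0"
  proof (rule prod_zero)
    show "\<exists>a\<in>UNIV. (LINT t|lborel. G a t * indicator {lo$a..hi$a} t) = 0"
      by (rule bexI[of _ i]) (use int_Icc_lin[OF le[of i]] in \<open>auto simp: G_def cmid\<close>)
  qed simp
  finally show ?thesis by simp
qed

lemma compact_unit_cube: "compact unit_cube" unfolding unit_cube_def by simp
lemma convex_unit_cube: "convex unit_cube" unfolding unit_cube_def by simp
lemma closed_unit_cube: "closed unit_cube" unfolding unit_cube_def by (rule closed_cbox)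

locale C1_cube =
  fixes f :: "real^'n::finite \<Rightarrow> real" and gradf :: "real^'n \<Rightarrow> real^'n"
  assumes deriv: "\<And>x. x \<in> unit_cube \<Longrightarrow> (f has_derivative (\<lambda>h. gradf x \<bullet> h)) (at x within unit_cube)"
    and cont_grad: "continuous_on unit_cube gradf"
begin

lemma cont_f: "continuous_on unit_cube f"
  using deriv has_derivative_continuous continuous_on_eq_continuous_within by blast

lemma grad_bound_ex: "\<exists>Gm\<ge>0. \<forall>x\<in>unit_cube. norm (gradf x) \<le> Gm"
proof -
  have "compact (gradf ` unit_cube)" by (rule compact_continuous_image[OF cont_grad compact_unit_cube])
  then obtain a where "\<forall>y\<in>gradf ` unit_cube. norm y \<le> a" using compact_imp_bounded bounded_iff by metis
  then show ?thesis by (intro exI[of _ "max a 0"]) auto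
qed

definition "Gm = (SOME Gm. Gm \<ge> 0 \<and> (\<forall>x\<in>unit_cube. norm (gradf x) \<le> Gm))"

lemma Gm: "Gm \<ge> 0" "x \<in> unit_cube \<Longrightarrow> norm (gradf x) \<le> Gm"
  using someI_ex[OF grad_bound_ex] unfolding Gm_def by auto

lemma onorm_inner: "onorm (\<lambda>h. v \<bullet> h) \<le> norm (v::real^'n)"
  using onorm_inner_right[of "\<lambda>x. x" v] by (simp add: onorm_id bounded_linear_ident)

lemma lipschitz_f:
  assumes "x \<in> unit_cube" "y \<in> unit_cube"
  shows "\<bar>f x - f y\<bar> \<le> Gm * norm (x - y)"
proof -
  have "norm (f x - f y) \<le> Gm * norm (x - y)"
  proof (rule differentiable_bound[OF convex_unit_cube deriv _ assms])
    fix z :: "real^'n" assume "z \<in> unit_cube"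
    then show "onorm (\<lambda>h. gradf z \<bullet> h) \<le> Gm" using onorm_inner Gm order_trans by blast
  qed
  then show ?thesis by simp
qed

lemma remainder_bound:
  assumes e: "e > 0"
  shows "\<exists>M. \<forall>m\<ge>M. \<forall>k\<in>grid_index m. \<forall>x\<in>grid_cell m k.
     \<bar>f x - f (cell_center m k) - gradf (cell_center m k) \<bullet> (x - cell_center m k)\<bar> \<le> e / real m"
proof -
  let ?d = "real CARD('n)"
  have dpos: "?d > 0" by simp
  have "uniformly_continuous_on unit_cube gradf"
    by (rule compact_uniformly_continuous[OF cont_grad compact_unit_cube])
  then obtain \<delta> where \<delta>: "\<delta> > 0"
    "\<And>x x'. x \<in> unit_cube \<Longrightarrow> x' \<in> unit_cube \<Longrightarrow> dist x' x < \<delta> \<Longrightarrow> dist (gradf x') (gradf x) < e / ?d"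
    unfolding uniformly_continuous_on_def using e dpos by (metis divide_pos_pos)
  obtain M :: nat where M: "real M > ?d / \<delta>" using reals_Archimedean2 by blast
  show ?thesis
  proof (intro exI[of _ M] allI impI ballI)
    fix m :: nat and k :: "'n \<Rightarrow> nat" and x :: "real^'n"
    assume m: "m \<ge> M" and k: "k \<in> grid_index m" and x: "x \<in> grid_cell m k"
    have "real m > ?d / \<delta>" using M m by linarith
    moreover have "?d / \<delta> > 0" using \<delta> dpos by simp
    ultimately have mpos: "m > 0" by (metis of_nat_0_less_iff order.strict_trans)
    have md: "?d / real m < \<delta>" using \<open>real m > ?d / \<delta>\<close> \<delta>(1) mpos by (simp add: field_simps)
    let ?c = "cell_center m k"
    let ?C = "grid_cell m k"
    have sub: "?C \<subseteq> unit_cube" by (rule grid_cell_subset[OF mpos k])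
    have cC: "?c \<in> ?C" by (rule cell_center_in[OF mpos])
    define h where "h y = f y - gradf ?c \<bullet> y" for y
    have hd: "(h has_derivative (\<lambda>v. (gradf y - gradf ?c) \<bullet> v)) (at y within ?C)" if "y \<in> ?C" for y
    proof -
      have "(f has_derivative (\<lambda>v. gradf y \<bullet> v)) (at y within ?C)"
        using deriv[of y] that sub has_derivative_subset by blast
      moreover have "((\<lambda>y. gradf ?c \<bullet> y) has_derivative (\<lambda>v. gradf ?c \<bullet> v)) (at y within ?C)"
        by (rule bounded_linear.has_derivative[OF bounded_linear_inner_right has_derivative_ident])
      ultimately have "(h has_derivative (\<lambda>v. gradf y \<bullet> v - gradf ?c \<bullet> v)) (at y within ?C)"
        unfolding h_def by (rule has_derivative_diff)
      then show ?thesis by (simp add: inner_diff_left)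
    qed
    have hb: "onorm (\<lambda>v. (gradf y - gradf ?c) \<bullet> v) \<le> e / ?d" if "y \<in> ?C" for y
    proof -
      have "norm (y - ?c) \<le> ?d / real m" by (rule cell_dist_center[OF mpos that])
      then have "dist y ?c < \<delta>" using md by (simp add: dist_norm)
      then have "dist (gradf y) (gradf ?c) < e / ?d" using \<delta>(2)[of ?c y] sub that cC by blast
      then have "norm (gradf y - gradf ?c) \<le> e / ?d" by (simp add: dist_norm)
      then show ?thesis using onorm_inner order_trans by blast
    qed
    have cvx: "convex ?C" unfolding grid_cell_def by (rule convex_box)
    have "norm (h x - h ?c) \<le> e / ?d * norm (x - ?c)"
      by (rule differentiable_bound[OF cvx hd hb x cC])
    also have "\<dots> \<le> e / ?d * (?d / real m)"
      using cell_dist_center[OF mpos x] e dpos by (intro mult_left_mono) auto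
    also have "\<dots> = e / real m" using dpos by simp
    finally show "\<bar>f x - f ?c - gradf ?c \<bullet> (x - ?c)\<bar> \<le> e / real m"
      unfolding h_def by (simp add: inner_diff_right algebra_simps)
  qed
qed

end

lemma cube_additivity:
  fixes \<phi> :: "real^'n::finite \<Rightarrow> real"
  assumes cont: "continuous_on unit_cube \<phi>" and m: "m > 0"
  shows "integral unit_cube \<phi> = (\<Sum>k\<in>grid_index m. integral (grid_cell m k) \<phi>)"
proof -
  let ?T = "grid_cell m ` grid_index m :: (real^'n) set set"
  have "(\<phi> has_integral (sum (\<lambda>S. integral S \<phi>) ?T)) (\<Union>?T)"
  proof (rule has_integral_Union)
    show "finite ?T" using finite_grid_index by blast
    show "(\<phi> has_integral integral S \<phi>) S" if "S \<in> ?T" for S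
    proof -
      obtain k where k: "k \<in> grid_index m" "S = grid_cell m k" using \<open>S \<in> ?T\<close> by blast
      have "continuous_on S \<phi>" using cont grid_cell_subset[OF m k(1)] k(2) continuous_on_subset by blast
      then have "\<phi> integrable_on S" unfolding k(2) grid_cell_def by (rule integrable_continuous)
      then show ?thesis by (rule integrable_integral)
    qed
    show "pairwise (\<lambda>S S'. negligible (S \<inter> S')) ?T"
      unfolding pairwise_def
    proof (intro ballI impI)
      fix S S' assume "S \<in> ?T" "S' \<in> ?T" "S \<noteq> S'"
      then obtain k k' where "S = grid_cell m k" "S' = grid_cell m k'" by blast
      with \<open>S \<noteq> S'\<close> have "k \<noteq> k'" by blast
      then show "negligible (S \<inter> S')" unfolding \<open>S = grid_cell m k\<close> \<open>S' = grid_cell m k'\<close>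
        by (rule grid_cell_inter_negligible[OF m])
    qed
  qed
  then have "integral (\<Union>?T) \<phi> = sum (\<lambda>S. integral S \<phi>) ?T" by (rule integral_unique)
  moreover have "\<Union>?T = unit_cube" by (rule union_grid_cells[OF m])
  moreover have "sum (\<lambda>S. integral S \<phi>) ?T = (\<Sum>k\<in>grid_index m. integral (grid_cell m k) \<phi>)"
    using sum.reindex[OF grid_cell_inj[OF m], of "\<lambda>S. integral S \<phi>"] by (simp only: comp_def)
  ultimately show ?thesis by simp
qed

lemma prob_space_cell:
  fixes k :: "'n::finite \<Rightarrow> nat"
  assumes "m > 0" shows "prob_space (uniform_measure lborel (grid_cell m k))"
  by (rule prob_space_uniform_measure) (simp_all add: emeasure_grid_cell[OF assms] assms)

lemma cell_integral_henstock:
  fixes k :: "'n::finite \<Rightarrow> nat" and \<phi> :: "real^'n \<Rightarrow> real"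
  assumes m: "m > 0" and [measurable]: "\<phi> \<in> borel_measurable borel"
    and cont: "continuous_on (grid_cell m k) \<phi>"
  shows "integral\<^sup>L (uniform_measure lborel (grid_cell m k)) \<phi> =
         real m ^ CARD('n) * integral (grid_cell m k) \<phi>"
proof -
  have cpt: "compact (grid_cell m k)" unfolding grid_cell_def by simp
  have si: "set_integrable lborel (grid_cell m k) \<phi>"
    unfolding set_integrable_def by (rule borel_integrable_compact[OF cpt cont])
  have "(LINT x|lborel. indicator (grid_cell m k) x * \<phi> x) = set_lebesgue_integral lborel (grid_cell m k) \<phi>"
    unfolding set_lebesgue_integral_def by simp
  also have "\<dots> = integral (grid_cell m k) \<phi>" by (rule set_borel_integral_eq_integral(2)[OF si])
  moreover have "integral\<^sup>L (uniform_measure lborel (grid_cell m k)) \<phi> =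
         real m ^ CARD('n) * (LINT x|lborel. indicator (grid_cell m k) x * \<phi> x)"
    by (rule cell_integral[OF m]) simp
  ultimately show ?thesis by simp
qed

lemma AE_cell: fixes k :: "'n::finite \<Rightarrow> nat" shows "AE x in uniform_measure lborel (grid_cell m k). x \<in> grid_cell m k"
  by (rule AE_uniform_measureI) auto

lemma AE_cellI:
  fixes k :: "'n::finite \<Rightarrow> nat"
  assumes "\<And>x. x \<in> grid_cell m k \<Longrightarrow> P x"
  shows "AE x in uniform_measure lborel (grid_cell m k). P x"
  by (rule AE_mp[OF AE_cell]) (use assms in auto)

lemma cell_integrable:
  fixes k :: "'n::finite \<Rightarrow> nat" and \<phi> :: "real^'n::finite \<Rightarrow> real"
  assumes m: "m > 0" and [measurable]: "\<phi> \<in> borel_measurable borel"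
    and B: "\<And>x. x \<in> grid_cell m k \<Longrightarrow> \<bar>\<phi> x\<bar> \<le> B"
  shows "integrable (uniform_measure lborel (grid_cell m k)) \<phi>"
proof -
  interpret prob_space "uniform_measure lborel (grid_cell m k)" by (rule prob_space_cell[OF m])
  show ?thesis
    by (rule integrable_const_bound[where B=B]) (use B in \<open>auto intro!: AE_cellI\<close>)
qed

lemma cell_integral_bound:
  fixes k :: "'n::finite \<Rightarrow> nat" and \<phi> :: "real^'n::finite \<Rightarrow> real"
  assumes m: "m > 0" and [measurable]: "\<phi> \<in> borel_measurable borel"
    and B: "\<And>x. x \<in> grid_cell m k \<Longrightarrow> \<bar>\<phi> x\<bar> \<le> B"
  shows "\<bar>integral\<^sup>L (uniform_measure lborel (grid_cell m k)) \<phi>\<bar> \<le> B"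
proof -
  interpret prob_space "uniform_measure lborel (grid_cell m k)" by (rule prob_space_cell[OF m])
  have int: "integrable (uniform_measure lborel (grid_cell m k)) \<phi>" by (rule cell_integrable[OF m _ B]) simp
  have "\<bar>integral\<^sup>L (uniform_measure lborel (grid_cell m k)) \<phi>\<bar> \<le> integral\<^sup>L (uniform_measure lborel (grid_cell m k)) (\<lambda>x. \<bar>\<phi> x\<bar>)"
    by (rule integral_abs_bound)
  also have "\<dots> \<le> integral\<^sup>L (uniform_measure lborel (grid_cell m k)) (\<lambda>x. B)"
    by (rule integral_mono_AE) (use int B in \<open>auto intro!: AE_cellI\<close>)
  also have "\<dots> = B" using prob_space by simp
  finally show ?thesis .
qed

lemma riemann_sum_conv:
  fixes H :: "real^'n::finite \<Rightarrow> real"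
  assumes cont: "continuous_on unit_cube H"
  shows "(\<lambda>m. (\<Sum>k\<in>grid_index m. H (cell_center m k)) / real m ^ CARD('n)) \<longlonglongrightarrow> integral unit_cube H"
proof (rule LIMSEQ_I)
  fix r :: real assume r: "r > 0"
  let ?d = "real CARD('n)"
  have dpos: "?d > 0" by simp
  have "uniformly_continuous_on unit_cube H"
    by (rule compact_uniformly_continuous[OF cont compact_unit_cube])
  then obtain \<delta> where \<delta>: "\<delta> > 0"
    "\<And>x x'. x \<in> unit_cube \<Longrightarrow> x' \<in> unit_cube \<Longrightarrow> dist x' x < \<delta> \<Longrightarrow> dist (H x') (H x) < r / 2"
    unfolding uniformly_continuous_on_def using r by (metis half_gt_zero)
  obtain M :: nat where M: "real M > ?d / \<delta>" using reals_Archimedean2 by blast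
  show "\<exists>no. \<forall>m\<ge>no. norm ((\<Sum>k\<in>grid_index m. H (cell_center m k)) / real m ^ CARD('n) - integral unit_cube H) < r"
  proof (intro exI[of _ M] allI impI)
    fix m :: nat assume m: "m \<ge> M"
    have "real m > ?d / \<delta>" using M m by linarith
    moreover have "?d / \<delta> > 0" using \<delta> dpos by simp
    ultimately have mpos: "m > 0" by (metis of_nat_0_less_iff order.strict_trans)
    have md: "?d / real m < \<delta>" using \<open>real m > ?d / \<delta>\<close> \<delta>(1) mpos by (simp add: field_simps)
    let ?N = "real m ^ CARD('n)"
    have Npos: "?N > 0" using mpos by simp
    have cellb: "\<bar>integral (grid_cell m k) H - H (cell_center m k) / ?N\<bar> \<le> (r/2) / ?N"
      if k: "k \<in> grid_index m" for k
    proof -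
      let ?C = "grid_cell m k" and ?c = "cell_center m k"
      have sub: "?C \<subseteq> unit_cube" by (rule grid_cell_subset[OF mpos k])
      have cC: "?c \<in> ?C" by (rule cell_center_in[OF mpos])
      have contC: "continuous_on ?C H" using cont sub continuous_on_subset by blast
      have hi: "((\<lambda>x. H x - H ?c) has_integral (integral ?C H - measure lborel ?C * H ?c)) ?C"
      proof -
        have "(H has_integral integral ?C H) ?C"
          using contC unfolding grid_cell_def by (intro integrable_integral integrable_continuous)
        moreover have "((\<lambda>x. H ?c) has_integral measure lborel ?C * H ?c) ?C"
          unfolding grid_cell_def using has_integral_const[of "H ?c"] by simp
        ultimately show "((\<lambda>x. H x - H ?c) has_integral (integral ?C H - measure lborel ?C * H ?c)) ?C"
          by (rule has_integral_diff)
      qed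
      obtain lo hi where lh: "?C = cbox lo hi" unfolding grid_cell_def by blast
      have "norm (integral ?C H - measure lborel ?C * H ?c) \<le> (r/2) * measure lborel ?C"
        unfolding lh
      proof (rule has_integral_bound[OF _ hi[unfolded lh]])
        show "0 \<le> r/2" using r by simp
        fix x assume "x \<in> cbox lo hi"
        then have x: "x \<in> ?C" unfolding lh .
        have "dist x ?c < \<delta>" using cell_dist_center[OF mpos x] md by (simp add: dist_norm)
        then have "dist (H x) (H ?c) < r/2" using \<delta>(2)[of ?c x] sub x cC by blast
        then show "norm (H x - H ?c) \<le> r/2" by (simp add: dist_norm)
      qed
      then show ?thesis using content_grid_cell[OF mpos, of k] Npos by (simp add: field_simps)
    qed
    let ?K = "grid_index m :: ('n \<Rightarrow> nat) set"
    have eqsum: "(\<Sum>k\<in>?K. H (cell_center m k)) / ?N - integral unit_cube H =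
        - (\<Sum>k\<in>?K. integral (grid_cell m k) H - H (cell_center m k) / ?N)"
      unfolding cube_additivity[OF cont mpos] sum_subtractf sum_divide_distrib by simp
    have "\<bar>(\<Sum>k\<in>?K. integral (grid_cell m k) H - H (cell_center m k) / ?N)\<bar>
        \<le> (\<Sum>k\<in>?K. \<bar>integral (grid_cell m k) H - H (cell_center m k) / ?N\<bar>)"
      by (rule sum_abs)
    also have "\<dots> \<le> (\<Sum>k\<in>?K. (r/2) / ?N)" by (rule sum_mono) (erule cellb)
    also have "\<dots> = real (card ?K) * ((r/2) / ?N)" by simp
    also have "\<dots> = r / 2" unfolding card_grid_index using Npos by simp
    finally have "\<bar>(\<Sum>k\<in>?K. integral (grid_cell m k) H - H (cell_center m k) / ?N)\<bar> \<le> r/2" .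
    then show "norm ((\<Sum>k\<in>grid_index m. H (cell_center m k)) / ?N - integral unit_cube H) < r"
      unfolding eqsum real_norm_def abs_minus_cancel using r by linarith
  qed
qed

lemma cell_integrable_cont:
  fixes k :: "'n::finite \<Rightarrow> nat" and \<phi> :: "real^'n \<Rightarrow> real"
  assumes m: "m > 0" and meas: "\<phi> \<in> borel_measurable borel" and cont: "continuous_on (grid_cell m k) \<phi>"
  shows "integrable (uniform_measure lborel (grid_cell m k)) \<phi>"
proof -
  have "compact (\<phi> ` grid_cell m k)"
    by (rule compact_continuous_image[OF cont]) (simp add: grid_cell_def)
  then obtain B where "\<forall>y\<in>\<phi> ` grid_cell m k. norm y \<le> B" using compact_imp_bounded bounded_iff by metis
  then show ?thesis by (intro cell_integrable[OF m meas]) auto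
qed

lemma inner_cart_real: "(a::real^'n::finite) \<bullet> b = (\<Sum>i\<in>UNIV. a$i * b$i)"
  by (simp add: inner_vec_def)

context C1_cube
begin

definition "g = on_cube f"

lemma g_meas[measurable]: "g \<in> borel_measurable borel"
proof -
  have "(\<lambda>x. if x \<in> unit_cube then f x else 0) \<in> borel_measurable borel"
    by (rule borel_measurable_continuous_on_if) (auto simp: cont_f closed_unit_cube)
  then show ?thesis unfolding g_def on_cube_def .
qed

lemma g_eq: "x \<in> unit_cube \<Longrightarrow> g x = f x"
  unfolding g_def on_cube_def by simp

lemma g_cont_cell:
  assumes m: "m > 0" and k: "k \<in> grid_index m"
  shows "continuous_on (grid_cell m k) g"
proof -
  have sub: "grid_cell m k \<subseteq> unit_cube" by (rule grid_cell_subset[OF m k])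
  have "continuous_on (grid_cell m k) f" using cont_f sub continuous_on_subset by blast
  then show ?thesis by (rule continuous_on_eq) (use sub g_eq in auto)
qed

definition "\<mu>c m k = integral\<^sup>L (uniform_measure lborel (grid_cell m k)) g"
definition "Vc m k = integral\<^sup>L (uniform_measure lborel (grid_cell m k)) (\<lambda>x. (g x - \<mu>c m k)^2)"

lemma \<mu>c_henstock:
  assumes m: "m > 0" and k: "k \<in> grid_index m"
  shows "\<mu>c m k = real m ^ CARD('n) * integral (grid_cell m k) f"
proof -
  have sub: "grid_cell m k \<subseteq> unit_cube" by (rule grid_cell_subset[OF m k])
  have "\<mu>c m k = real m ^ CARD('n) * integral (grid_cell m k) g"
    unfolding \<mu>c_def by (rule cell_integral_henstock[OF m g_meas g_cont_cell[OF m k]])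
  also have "integral (grid_cell m k) g = integral (grid_cell m k) f"
    by (rule integral_cong) (use sub g_eq in auto)
  finally show ?thesis .
qed

lemma dev_bound:
  assumes m: "m > 0" and k: "k \<in> grid_index m" and x: "x \<in> grid_cell m k"
  shows "\<bar>g x - \<mu>c m k\<bar> \<le> Gm * real CARD('n) / real m"
proof -
  have sub: "grid_cell m k \<subseteq> unit_cube" by (rule grid_cell_subset[OF m k])
  interpret prob_space "uniform_measure lborel (grid_cell m k)" by (rule prob_space_cell[OF m])
  have int: "integrable (uniform_measure lborel (grid_cell m k)) g"
    by (rule cell_integrable_cont[OF m g_meas g_cont_cell[OF m k]])
  have "g x - \<mu>c m k = integral\<^sup>L (uniform_measure lborel (grid_cell m k)) (\<lambda>y. g x - g y)"
    unfolding \<mu>c_def using int prob_space by simp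
  also have "\<bar>\<dots>\<bar> \<le> Gm * real CARD('n) / real m"
  proof (rule cell_integral_bound[OF m])
    fix y assume y: "y \<in> grid_cell m k"
    have "g x = f x" "g y = f y" using x y sub g_eq by (auto simp: subset_iff)
    then have "\<bar>g x - g y\<bar> = \<bar>f x - f y\<bar>" by simp
    also have "\<dots> \<le> Gm * norm (x - y)" using lipschitz_f x y sub by blast
    also have "\<dots> \<le> Gm * (real CARD('n) / real m)"
      by (rule mult_left_mono[OF cell_dist[OF m x y] Gm(1)])
    finally show "\<bar>g x - g y\<bar> \<le> Gm * real CARD('n) / real m" by simp
  qed simp
  finally show ?thesis .
qed

lemma Vc_bound:
  assumes m: "m > 0" and k: "k \<in> grid_index m"
  shows "0 \<le> Vc m k" "Vc m k \<le> (Gm * real CARD('n) / real m)^2"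
proof -
  interpret prob_space "uniform_measure lborel (grid_cell m k)" by (rule prob_space_cell[OF m])
  show "0 \<le> Vc m k" unfolding Vc_def by (rule integral_nonneg_AE) auto
  have "\<bar>Vc m k\<bar> \<le> (Gm * real CARD('n) / real m)^2"
    unfolding Vc_def
  proof (rule cell_integral_bound[OF m])
    fix x assume "x \<in> grid_cell m k"
    then have "\<bar>g x - \<mu>c m k\<bar> \<le> Gm * real CARD('n) / real m" by (rule dev_bound[OF m k])
    then have "\<bar>g x - \<mu>c m k\<bar>^2 \<le> (Gm * real CARD('n) / real m)^2"
      by (rule power_mono) simp
    then show "\<bar>(g x - \<mu>c m k)^2\<bar> \<le> (Gm * real CARD('n) / real m)^2"
      by simp
  qed simp
  then show "Vc m k \<le> (Gm * real CARD('n) / real m)^2" by simp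
qed

end

context C1_cube
begin

lemma Vc_approx:
  assumes e: "e > 0"
  shows "\<exists>M>0. \<forall>m\<ge>M. \<forall>k\<in>grid_index m.
     \<bar>Vc m k - (norm (gradf (cell_center m k)))\<^sup>2 / (12 * (real m)\<^sup>2)\<bar> \<le> e / (real m)\<^sup>2"
proof -
  let ?d = "real CARD('n)"
  have dpos: "?d > 0" by simp
  define \<epsilon> where "\<epsilon> = min 1 (e / (4 * Gm * ?d + 4))"
  have den: "4 * Gm * ?d + 4 > 0" using Gm(1) dpos by (simp add: add_nonneg_pos)
  have \<epsilon>pos: "\<epsilon> > 0" unfolding \<epsilon>_def using e den by simp
  have \<epsilon>1: "\<epsilon> \<le> 1" unfolding \<epsilon>_def by simp
  have \<epsilon>e: "(4 * Gm * ?d + 4) * \<epsilon> \<le> e"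
  proof -
    have "\<epsilon> \<le> e / (4 * Gm * ?d + 4)" unfolding \<epsilon>_def by simp
    then have "(4 * Gm * ?d + 4) * \<epsilon> \<le> (4 * Gm * ?d + 4) * (e / (4 * Gm * ?d + 4))"
      using den by (intro mult_left_mono) auto
    also have "\<dots> = e" using den by simp
    finally show ?thesis .
  qed
  obtain M where M: "\<And>m k x. m \<ge> M \<Longrightarrow> k \<in> grid_index m \<Longrightarrow> x \<in> grid_cell m k \<Longrightarrow>
     \<bar>f x - f (cell_center m k) - gradf (cell_center m k) \<bullet> (x - cell_center m k)\<bar> \<le> \<epsilon> / real m"
    using remainder_bound[OF \<epsilon>pos] by blast
  show ?thesis
  proof (intro exI[of _ "max M 1"] conjI allI impI ballI)
    show "max M 1 > 0" by simp
    fix m :: nat and k :: "'n \<Rightarrow> nat"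
    assume mM: "max M 1 \<le> m" and k: "k \<in> grid_index m"
    have m: "m > 0" using mM by simp
    have mM': "m \<ge> M" using mM by simp
    have mpos: "real m > 0" using m by simp
    let ?C = "grid_cell m k" and ?c = "cell_center m k"
    let ?\<nu> = "uniform_measure lborel ?C"
    define G where "G = gradf ?c"
    interpret prob_space ?\<nu> by (rule prob_space_cell[OF m])
    have probU: "prob UNIV = 1" using prob_space by simp
    have sub: "?C \<subseteq> unit_cube" by (rule grid_cell_subset[OF m k])
    have cC: "?c \<in> ?C" by (rule cell_center_in[OF m])
    have normG: "norm G \<le> Gm" unfolding G_def using Gm(2) sub cC by blast
    define L where "L x = G \<bullet> (x - ?c)" for x
    define r where "r x = g x - f ?c - L x" for x
    have Lsum: "L x = (\<Sum>i\<in>UNIV. G$i * (x$i - ?c$i))" for x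
      unfolding L_def inner_cart_real by simp
    have contL: "continuous_on UNIV L" unfolding L_def by (intro continuous_intros)
    have [measurable]: "L \<in> borel_measurable borel" by (rule borel_measurable_continuous_onI[OF contL])
    have [measurable]: "r \<in> borel_measurable borel" unfolding r_def by measurable
    have contLC: "continuous_on ?C L" using contL continuous_on_subset by blast
    have contrC: "continuous_on ?C r" unfolding r_def
      by (intro continuous_intros g_cont_cell[OF m k] contLC)
    have rb: "\<bar>r x\<bar> \<le> \<epsilon> / real m" if x: "x \<in> ?C" for x
    proof -
      have "g x = f x" using x sub g_eq by (auto simp: subset_iff)
      then show ?thesis unfolding r_def L_def G_def using M[OF mM' k x] by simp
    qed
    have Lb: "\<bar>L x\<bar> \<le> Gm * ?d / real m" if x: "x \<in> ?C" for x
    proof -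
      have "\<bar>L x\<bar> \<le> norm G * norm (x - ?c)" unfolding L_def by (rule Cauchy_Schwarz_ineq2)
      also have "\<dots> \<le> Gm * (?d / real m)"
        by (rule mult_mono[OF normG cell_dist_center[OF m x] Gm(1)]) simp
      finally show ?thesis by simp
    qed
    have intL: "integrable ?\<nu> L" by (rule cell_integrable_cont[OF m _ contLC]) simp
    have intr: "integrable ?\<nu> r" by (rule cell_integrable_cont[OF m _ contrC]) simp
    have intc: "integrable ?\<nu> (\<lambda>x. c)" for c :: real by simp
    have intcoord: "integrable ?\<nu> (\<lambda>x. (x$i - ?c$i) * (x$j - ?c$j))" for i j
      by (rule cell_integrable_cont[OF m]) (auto intro!: continuous_intros)
    have intcoord1: "integrable ?\<nu> (\<lambda>x. x$i - ?c$i)" for i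
      by (rule cell_integrable_cont[OF m]) (auto intro!: continuous_intros)
    have EL: "integral\<^sup>L ?\<nu> L = 0"
    proof -
      have "integral\<^sup>L ?\<nu> L = (\<Sum>i\<in>UNIV. integral\<^sup>L ?\<nu> (\<lambda>x. G$i * (x$i - ?c$i)))"
        unfolding Lsum by (rule Bochner_Integration.integral_sum[where f="\<lambda>i x. G$i * (x$i - ?c$i)"]) (auto intro: intcoord1)
      also have "\<dots> = (\<Sum>i\<in>UNIV. G$i * integral\<^sup>L ?\<nu> (\<lambda>x. x$i - ?c$i))"
        by simp
      also have "\<dots> = 0" by (simp add: cell_moment1[OF m])
      finally show ?thesis .
    qed
    have EL2: "integral\<^sup>L ?\<nu> (\<lambda>x. (L x)^2) = (norm G)^2 / (12 * (real m)^2)"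
    proof -
      have sq: "(L x)^2 = (\<Sum>i\<in>UNIV. \<Sum>j\<in>UNIV. (G$i * G$j) * ((x$i - ?c$i) * (x$j - ?c$j)))" for x
        unfolding power2_eq_square Lsum sum_product by (simp add: ac_simps)
      have "integral\<^sup>L ?\<nu> (\<lambda>x. (L x)^2) =
          (\<Sum>i\<in>UNIV. integral\<^sup>L ?\<nu> (\<lambda>x. \<Sum>j\<in>UNIV. (G$i * G$j) * ((x$i - ?c$i) * (x$j - ?c$j))))"
        unfolding sq
        by (rule Bochner_Integration.integral_sum[where f="\<lambda>i x. \<Sum>j\<in>UNIV. (G$i * G$j) * ((x$i - ?c$i) * (x$j - ?c$j))"])
           (auto intro!: intcoord)
      also have "\<dots> = (\<Sum>i\<in>UNIV. \<Sum>j\<in>UNIV. integral\<^sup>L ?\<nu> (\<lambda>x. (G$i * G$j) * ((x$i - ?c$i) * (x$j - ?c$j))))"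
      proof (rule sum.cong[OF refl])
        fix i show "integral\<^sup>L ?\<nu> (\<lambda>x. \<Sum>j\<in>UNIV. (G$i * G$j) * ((x$i - ?c$i) * (x$j - ?c$j))) =
            (\<Sum>j\<in>UNIV. integral\<^sup>L ?\<nu> (\<lambda>x. (G$i * G$j) * ((x$i - ?c$i) * (x$j - ?c$j))))"
          by (rule Bochner_Integration.integral_sum[where f="\<lambda>j x. (G$i * G$j) * ((x$i - ?c$i) * (x$j - ?c$j))"]) (auto intro!: intcoord)
      qed
      also have "\<dots> = (\<Sum>i\<in>UNIV. \<Sum>j\<in>UNIV. (G$i * G$j) * (if i = j then 1 / (12 * (real m)^2) else 0))"
        by (simp add: cell_moment2[OF m])
      also have "\<dots> = (\<Sum>i\<in>UNIV. (G$i * G$i) / (12 * (real m)^2))"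
        by (simp add: if_distrib[of "\<lambda>t. _ * t"] cong: if_cong)
      also have "\<dots> = (G \<bullet> G) / (12 * (real m)^2)"
        by (simp add: inner_cart_real sum_divide_distrib)
      also have "\<dots> = (norm G)^2 / (12 * (real m)^2)" by (simp add: power2_norm_eq_inner)
      finally show ?thesis .
    qed
    define Er where "Er = integral\<^sup>L ?\<nu> r"
    have Erb: "\<bar>Er\<bar> \<le> \<epsilon> / real m" unfolding Er_def by (rule cell_integral_bound[OF m _ rb]) simp
    have gdec: "g x = f ?c + L x + r x" for x unfolding r_def by simp
    have \<mu>eq: "\<mu>c m k = f ?c + Er"
    proof -
      have "\<mu>c m k = integral\<^sup>L ?\<nu> (\<lambda>x. f ?c + L x + r x)" unfolding \<mu>c_def gdec ..
      also have "\<dots> = f ?c + integral\<^sup>L ?\<nu> L + Er"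
        unfolding Er_def using intL intr by (simp add: probU)
      finally show ?thesis using EL by simp
    qed
    define s where "s x = r x - Er" for x
    have [measurable]: "s \<in> borel_measurable borel" unfolding s_def by measurable
    have contsC: "continuous_on ?C s" unfolding s_def by (intro continuous_intros contrC)
    have sb: "\<bar>s x\<bar> \<le> 2 * \<epsilon> / real m" if x: "x \<in> ?C" for x
      using rb[OF x] Erb unfolding s_def by simp
    have dec: "(g x - \<mu>c m k)^2 = (L x)^2 + (2 * L x * s x + (s x)^2)" for x
      unfolding \<mu>eq s_def gdec by (simp add: power2_eq_square algebra_simps)
    have int2: "integrable ?\<nu> (\<lambda>x. 2 * L x * s x + (s x)^2)"
      by (rule cell_integrable_cont[OF m]) (auto intro!: continuous_intros contsC contLC)
    have intL2: "integrable ?\<nu> (\<lambda>x. (L x)^2)"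
      by (rule cell_integrable_cont[OF m]) (auto intro!: continuous_intros contLC)
    have "Vc m k = integral\<^sup>L ?\<nu> (\<lambda>x. (L x)^2) + integral\<^sup>L ?\<nu> (\<lambda>x. 2 * L x * s x + (s x)^2)"
      unfolding Vc_def dec by (rule Bochner_Integration.integral_add[OF intL2 int2])
    then have "Vc m k - (norm G)^2 / (12 * (real m)^2) = integral\<^sup>L ?\<nu> (\<lambda>x. 2 * L x * s x + (s x)^2)"
      using EL2 by simp
    also have "\<bar>\<dots>\<bar> \<le> 2 * (Gm * ?d / real m) * (2 * \<epsilon> / real m) + (2 * \<epsilon> / real m)^2"
    proof (rule cell_integral_bound[OF m])
      fix x assume x: "x \<in> ?C"
      have a: "\<bar>L x * s x\<bar> \<le> (Gm * ?d / real m) * (2 * \<epsilon> / real m)"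
        unfolding abs_mult by (rule mult_mono[OF Lb[OF x] sb[OF x]]) (use Gm(1) in auto)
      have b: "\<bar>s x\<bar>^2 \<le> (2 * \<epsilon> / real m)^2"
        by (rule power_mono[OF sb[OF x]]) simp
      have t1: "\<bar>2 * L x * s x + (s x)^2\<bar> \<le> \<bar>2 * L x * s x\<bar> + \<bar>(s x)^2\<bar>" by (rule abs_triangle_ineq)
      have t2: "\<bar>2 * L x * s x\<bar> = 2 * \<bar>L x * s x\<bar>" by (simp add: abs_mult)
      have t3: "\<bar>(s x)^2\<bar> = \<bar>s x\<bar>^2" by simp
      have "\<bar>2 * L x * s x + (s x)^2\<bar> \<le> 2 * \<bar>L x * s x\<bar> + \<bar>s x\<bar>^2"
        using t1 t2 t3 by linarith
      then show "\<bar>2 * L x * s x + (s x)^2\<bar> \<le> 2 * (Gm * ?d / real m) * (2 * \<epsilon> / real m) + (2 * \<epsilon> / real m)^2"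
        using a b by linarith
    qed simp
    also have "\<dots> = (4 * Gm * ?d * \<epsilon> + 4 * \<epsilon>^2) / (real m)^2"
    proof -
      define q where "q = 1 / real m"
      have q1: "Gm * ?d / real m = Gm * ?d * q" "2 * \<epsilon> / real m = 2 * \<epsilon> * q"
        "(4 * Gm * ?d * \<epsilon> + 4 * \<epsilon>^2) / (real m)^2 = (4 * Gm * ?d * \<epsilon> + 4 * \<epsilon>^2) * q^2"
        unfolding q_def by (simp_all add: power_one_over)
      show ?thesis unfolding q1 by (simp add: power2_eq_square algebra_simps)
    qed
    also have "\<dots> \<le> e / (real m)^2"
    proof (rule divide_right_mono)
      have "4 * \<epsilon>^2 \<le> 4 * \<epsilon>" using \<epsilon>pos \<epsilon>1 by (simp add: power2_eq_square mult_le_cancel_left1)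
      then show "4 * Gm * ?d * \<epsilon> + 4 * \<epsilon>^2 \<le> e" using \<epsilon>e by (simp add: algebra_simps)
    qed simp
    finally show "\<bar>Vc m k - (norm (gradf ?c))\<^sup>2 / (12 * (real m)\<^sup>2)\<bar> \<le> e / (real m)\<^sup>2"
      unfolding G_def .
  qed
qed

end

context C1_cube
begin

definition "W m = (real m)^2 / real m ^ CARD('n) * (\<Sum>k\<in>grid_index m. Vc m k)"

lemma W_conv: "W \<longlonglongrightarrow> (1/12) * integral unit_cube (\<lambda>x. (norm (gradf x))\<^sup>2)"
proof -
  define H where "H x = (norm (gradf x))\<^sup>2" for x
  have contH: "continuous_on unit_cube H" unfolding H_def by (intro continuous_intros cont_grad)
  define R where "R m = (\<Sum>k\<in>grid_index m. H (cell_center m k)) / real m ^ CARD('n)" for m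
  have R: "R \<longlonglongrightarrow> integral unit_cube H" unfolding R_def by (rule riemann_sum_conv[OF contH])
  have D: "(\<lambda>m. W m - R m / 12) \<longlonglongrightarrow> 0"
  proof (rule LIMSEQ_I)
    fix r :: real assume r: "r > 0"
    obtain M where M: "M > 0" "\<And>m k. m \<ge> M \<Longrightarrow> k \<in> grid_index m \<Longrightarrow>
        \<bar>Vc m k - (norm (gradf (cell_center m k)))\<^sup>2 / (12 * (real m)\<^sup>2)\<bar> \<le> (r/2) / (real m)\<^sup>2"
      using Vc_approx[of "r/2"] r by auto
    show "\<exists>no. \<forall>m\<ge>no. norm (W m - R m / 12 - 0) < r"
    proof (intro exI[of _ M] allI impI)
      fix m assume m: "m \<ge> M"
      have mpos: "real m > 0" using m M(1) by simp
      let ?N = "real m ^ CARD('n)"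
      let ?K = "grid_index m :: ('n \<Rightarrow> nat) set"
      have Npos: "?N > 0" using mpos by simp
      have eq1: "(\<Sum>k\<in>?K. H (cell_center m k) / (12 * (real m)^2)) = (\<Sum>k\<in>?K. H (cell_center m k)) / (12 * (real m)^2)"
        by (simp add: sum_divide_distrib)
      have eq2: "(real m)^2 / ?N * ((\<Sum>k\<in>?K. H (cell_center m k)) / (12 * (real m)^2)) =
          (\<Sum>k\<in>?K. H (cell_center m k)) / ?N / 12"
        using mpos by simp
      have eq: "W m - R m / 12 = (real m)^2 / ?N * (\<Sum>k\<in>?K. Vc m k - H (cell_center m k) / (12 * (real m)^2))"
        unfolding W_def R_def sum_subtractf right_diff_distrib eq1 eq2 by simp
      have "\<bar>\<Sum>k\<in>?K. Vc m k - H (cell_center m k) / (12 * (real m)^2)\<bar> \<le>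
          (\<Sum>k\<in>?K. \<bar>Vc m k - H (cell_center m k) / (12 * (real m)^2)\<bar>)" by (rule sum_abs)
      also have "\<dots> \<le> (\<Sum>k\<in>?K. (r/2) / (real m)^2)"
        by (rule sum_mono) (unfold H_def, erule M(2)[OF m])
      also have "\<dots> = ?N * ((r/2) / (real m)^2)" by (simp add: card_grid_index)
      finally have sb: "\<bar>\<Sum>k\<in>?K. Vc m k - H (cell_center m k) / (12 * (real m)^2)\<bar> \<le> ?N * ((r/2) / (real m)^2)" .
      have absq: "\<bar>(real m)^2 / ?N\<bar> = (real m)^2 / ?N" using Npos by simp
      have "\<bar>W m - R m / 12\<bar> \<le> (real m)^2 / ?N * (?N * ((r/2) / (real m)^2))"
        unfolding eq abs_mult absq by (rule mult_left_mono[OF sb]) (use Npos in simp)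
      also have "\<dots> = r/2" using Npos mpos by (simp add: field_simps)
      finally show "norm (W m - R m / 12 - 0) < r" using r by simp
    qed
  qed
  have "(\<lambda>m. (W m - R m / 12) + R m / 12) \<longlonglongrightarrow> 0 + integral unit_cube H / 12"
    by (intro tendsto_add D tendsto_divide R tendsto_const) simp
  then show ?thesis unfolding H_def by simp
qed

end

lemma char_distr_PiM_sum:
  fixes M :: "'i \<Rightarrow> 'a measure" and Z :: "'i \<Rightarrow> 'a \<Rightarrow> real"
  assumes fin: "finite I" and ps: "\<And>i. prob_space (M i)"
    and Zm: "\<And>i. i \<in> I \<Longrightarrow> Z i \<in> borel_measurable (M i)"
  shows "char (distr (Pi\<^sub>M I M) borel (\<lambda>U. \<Sum>i\<in>I. Z i (U i))) t = (\<Prod>i\<in>I. char (distr (M i) borel (Z i)) t)"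
proof -
  interpret product_prob_space M
    by (simp add: product_prob_space_def product_prob_space_axioms_def product_sigma_finite_def ps
        prob_space_imp_sigma_finite)
  have meas: "(\<lambda>U. \<Sum>i\<in>I. Z i (U i)) \<in> borel_measurable (Pi\<^sub>M I M)"
  proof (rule borel_measurable_sum)
    fix i assume i: "i \<in> I"
    show "(\<lambda>U. Z i (U i)) \<in> borel_measurable (Pi\<^sub>M I M)"
      by (rule measurable_compose[OF measurable_component_singleton[OF i, of M] Zm[OF i]])
  qed
  have "char (distr (Pi\<^sub>M I M) borel (\<lambda>U. \<Sum>i\<in>I. Z i (U i))) t =
      (CLINT U|Pi\<^sub>M I M. iexp (t * (\<Sum>i\<in>I. Z i (U i))))"
    unfolding char_def by (rule integral_distr[OF meas]) simp
  also have "\<dots> = (CLINT U|Pi\<^sub>M I M. (\<Prod>i\<in>I. iexp (t * Z i (U i))))"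
  proof (rule Bochner_Integration.integral_cong[OF refl])
    fix U :: "'i \<Rightarrow> 'a"
    have "\<i> * complex_of_real (t * (\<Sum>i\<in>I. Z i (U i))) = (\<Sum>i\<in>I. \<i> * complex_of_real (t * Z i (U i)))"
      by (simp add: sum_distrib_left)
    then show "iexp (t * (\<Sum>i\<in>I. Z i (U i))) = (\<Prod>i\<in>I. iexp (t * Z i (U i)))"
      by (simp add: exp_sum[OF fin])
  qed
  also have "\<dots> = (\<Prod>i\<in>I. CLINT x|M i. iexp (t * Z i x))"
  proof (rule product_integral_prod[OF fin])
    fix i assume i: "i \<in> I"
    interpret Mi: prob_space "M i" by (rule ps)
    show "integrable (M i) (\<lambda>x. iexp (t * Z i x))"
      by (rule finite_measure.integrable_const_bound[where B=1])
         (use Zm[OF i] ps[of i] in \<open>auto simp: norm_exp_i_times prob_space_def\<close>)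
  qed
  also have "\<dots> = (\<Prod>i\<in>I. char (distr (M i) borel (Z i)) t)"
  proof (rule prod.cong[OF refl])
    fix i assume i: "i \<in> I"
    show "(CLINT x|M i. iexp (t * Z i x)) = char (distr (M i) borel (Z i)) t"
      unfolding char_def by (rule integral_distr[symmetric, OF Zm[OF i]]) simp
  qed
  finally show ?thesis .
qed

lemma exp_minus_approx:
  fixes y :: real assumes y: "0 \<le> y"
  shows "\<bar>exp (- y) - (1 - y)\<bar> \<le> y^2"
proof -
  have low: "1 - y \<le> exp (- y)" using exp_ge_add_one_self[of "-y"] by simp
  have q: "1 + y + y^2/2 \<le> exp y" by (rule exp_lower_Taylor_quadratic[OF y])
  have qpos: "0 < 1 + y + y^2/2" using y by (simp add: add_pos_nonneg)
  have "1 \<le> (1 - y + y^2) * (1 + y + y^2/2)"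
  proof -
    have "(1 - y + y^2) * (1 + y + y^2/2) = 1 + (y^2/2 + y^3/2 + y^4/2)"
      by (simp add: field_simps power2_eq_square power3_eq_cube power4_eq_xxxx)
    moreover have "0 \<le> y^2/2 + y^3/2 + y^4/2" using y by simp
    ultimately show ?thesis by linarith
  qed
  moreover have "0 \<le> 1 - y + y^2"
  proof -
    have "0 \<le> (y - 1/2)^2 + 3/4" by simp
    then show ?thesis by (simp add: power2_eq_square algebra_simps)
  qed
  ultimately have "1 \<le> (1 - y + y^2) * exp y"
    using q by (meson mult_left_mono order_trans)
  then have "exp (- y) \<le> 1 - y + y^2"
    by (simp add: exp_minus field_simps)
  with low show ?thesis by simp
qed

lemma inv_sqrt_pow_tendsto:
  assumes "d > 0"
  shows "(\<lambda>m::nat. 1 / sqrt (real m ^ d)) \<longlonglongrightarrow> 0"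
proof -
  have "filterlim (\<lambda>m::nat. real m ^ d) at_top sequentially"
    by (rule filterlim_pow_at_top[OF assms filterlim_real_sequentially])
  then have "filterlim (\<lambda>m::nat. sqrt (real m ^ d)) at_top sequentially"
    by (rule filterlim_compose[OF sqrt_at_top])
  then show ?thesis
    by (intro tendsto_divide_0[OF tendsto_const] filterlim_at_top_imp_at_infinity)
qed

lemma inv_pow_tendsto:
  assumes "d > 0"
  shows "(\<lambda>m::nat. 1 / (real m ^ d)) \<longlonglongrightarrow> 0"
proof -
  have "filterlim (\<lambda>m::nat. real m ^ d) at_top sequentially"
    by (rule filterlim_pow_at_top[OF assms filterlim_real_sequentially])
  then show ?thesis
    by (intro tendsto_divide_0[OF tendsto_const] filterlim_at_top_imp_at_infinity)
qed

lemma powr_D_eq: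
  assumes m: "m > 0" and d: "d > 0"
  shows "real (m ^ d) powr (- 1/2 - 1 / real d) = 1 / (sqrt (real m ^ d) * real m)"
proof -
  have mp: "real m > 0" using m by simp
  have N: "real (m ^ d) = real m powr real d" using mp by (simp add: powr_realpow)
  have e1: "real d * (- 1/2 - 1 / real d) = - (real d / 2) - 1" using d by (simp add: field_simps)
  have e2: "real m powr (- (real d / 2) - 1) = real m powr (- (real d / 2)) / real m powr 1"
    by (rule powr_diff)
  have e3: "real m powr (- (real d / 2)) / real m powr 1 = inverse (real m powr (real d / 2)) / real m"
    using mp by (simp only: powr_minus powr_one_gt_zero_iff powr_one)
  have e4: "sqrt (real m ^ d) = (real m powr real d) powr (1/2)"
    using mp by (simp add: powr_realpow powr_half_sqrt)
  have e5: "(real m powr real d) powr (1/2) = real m powr (real d / 2)" by (simp add: powr_powr)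
  have "real (m ^ d) powr (- 1/2 - 1 / real d) = (real m powr real d) powr (- 1/2 - 1 / real d)"
    by (simp only: N)
  also have "\<dots> = real m powr (real d * (- 1/2 - 1 / real d))" by (rule powr_powr)
  also have "\<dots> = inverse (real m powr (real d / 2)) / real m" unfolding e1 by (simp only: e2 e3)
  also have "\<dots> = 1 / (sqrt (real m ^ d) * real m)"
    unfolding e4 e5 by (simp only: divide_inverse inverse_mult_distrib mult_1_left)
  finally show ?thesis .
qed

lemma borel_measurable_uniform_lborel:
  "borel_measurable (uniform_measure lborel A) = borel_measurable (borel :: ('a::euclidean_space) measure)"
  by (rule measurable_cong_sets) simp_all

context C1_cube
begin

lemma strat_measurable:
  "(\<lambda>U. (strat_estimate f m U - \<mu>) / D) \<in> borel_measurable (strat_sample m)"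
proof -
  have "(\<lambda>U. \<Sum>k\<in>grid_index m. g (U k)) \<in> borel_measurable (strat_sample m)"
    unfolding strat_sample_def
  proof (rule borel_measurable_sum)
    fix k :: "'n \<Rightarrow> nat" assume k: "k \<in> grid_index m"
    have "g \<in> borel_measurable (uniform_measure lborel (grid_cell m k))"
      unfolding borel_measurable_uniform_lborel by (rule g_meas)
    then show "(\<lambda>U. g (U k)) \<in> borel_measurable (Pi\<^sub>M (grid_index m) (\<lambda>k. uniform_measure lborel (grid_cell m k)))"
      by (rule measurable_compose[OF measurable_component_singleton[OF k]])
  qed
  then show ?thesis unfolding strat_estimate_def g_def[symmetric] by measurable
qed

lemma prob_strat: "prob_space (strat_sample m :: (('n \<Rightarrow> nat) \<Rightarrow> real^'n) measure)"
proof (cases "m = 0")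
  case True
  then have e: "grid_index m = ({} :: ('n \<Rightarrow> nat) set)" by (auto simp: grid_index_iff)
  show ?thesis unfolding strat_sample_def by (rule prob_space_PiM) (simp add: e)
next
  case False
  then show ?thesis unfolding strat_sample_def by (intro prob_space_PiM prob_space_cell) simp
qed

end

context C1_cube
begin

lemma Z_facts:
  fixes k :: "'n \<Rightarrow> nat" and s :: real
  assumes m: "m > 0" and k: "k \<in> grid_index m" and s: "s > 0"
  defines "Z \<equiv> \<lambda>x. (g x - \<mu>c m k) / s"
  defines "B \<equiv> Gm * real CARD('n) / real m / s"
  shows "norm (char (distr (uniform_measure lborel (grid_cell m k)) borel Z) t
           - complex_of_real (exp (- (t^2 * (Vc m k / s^2) / 2))))
         \<le> \<bar>t\<bar>^3 * B^3 / 6 + (t^2 / 2)^2 * B^4"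
proof -
  let ?\<nu> = "uniform_measure lborel (grid_cell m k)"
  interpret prob_space ?\<nu> by (rule prob_space_cell[OF m])
  have probU: "prob UNIV = 1" using prob_space by simp
  have Zm[measurable]: "Z \<in> borel_measurable borel" unfolding Z_def by measurable
  have Zm': "Z \<in> borel_measurable ?\<nu>" unfolding borel_measurable_uniform_lborel by (rule Zm)
  have contZ: "continuous_on (grid_cell m k) Z" unfolding Z_def
    by (intro continuous_intros g_cont_cell[OF m k]) (use s in simp)
  have intZ: "integrable ?\<nu> Z" by (rule cell_integrable_cont[OF m Zm contZ])
  have intZ2: "integrable ?\<nu> (\<lambda>x. (Z x)^2)"
    by (rule cell_integrable_cont[OF m]) (auto intro!: continuous_intros contZ)
  have intg: "integrable ?\<nu> g" by (rule cell_integrable_cont[OF m g_meas g_cont_cell[OF m k]])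
  have EZ: "integral\<^sup>L ?\<nu> Z = 0"
  proof -
    have "integral\<^sup>L ?\<nu> Z = integral\<^sup>L ?\<nu> (\<lambda>x. g x - \<mu>c m k) / s"
      unfolding Z_def by (rule integral_divide_zero)
    also have "integral\<^sup>L ?\<nu> (\<lambda>x. g x - \<mu>c m k) = \<mu>c m k - \<mu>c m k"
      using intg by (simp add: probU \<mu>c_def)
    finally show ?thesis by simp
  qed
  define v where "v = Vc m k / s^2"
  have varZ: "(LINT x|?\<nu>. (Z x - integral\<^sup>L ?\<nu> Z)^2) = v"
  proof -
    have "(LINT x|?\<nu>. (Z x - integral\<^sup>L ?\<nu> Z)^2) = (LINT x|?\<nu>. (Z x)^2)"
      by (simp only: EZ diff_zero)
    also have "\<dots> = (LINT x|?\<nu>. (g x - \<mu>c m k)^2 / s^2)"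
      unfolding Z_def by (simp add: power_divide)
    also have "\<dots> = Vc m k / s^2" unfolding Vc_def by (rule integral_divide_zero)
    finally show ?thesis unfolding v_def .
  qed
  have Zb: "\<bar>Z x\<bar> \<le> B" if x: "x \<in> grid_cell m k" for x
  proof -
    have "\<bar>Z x\<bar> = \<bar>g x - \<mu>c m k\<bar> / s" unfolding Z_def using s by simp
    also have "\<dots> \<le> (Gm * real CARD('n) / real m) / s"
      using dev_bound[OF m k x] s by (intro divide_right_mono) auto
    finally show ?thesis unfolding B_def .
  qed
  have B0: "0 \<le> B" unfolding B_def using Gm(1) s by simp
  have approx: "cmod (char (distr ?\<nu> borel Z) t - complex_of_real (1 - t^2 * v / 2)) \<le>
      t^2 / 6 * (LINT x|?\<nu>. min (6 * (Z x)^2) (\<bar>t\<bar> * \<bar>Z x\<bar> ^ 3))"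
    by (rule char_approx3'[OF Zm' intZ intZ2 EZ varZ refl])
  have "\<bar>LINT x|?\<nu>. min (6 * (Z x)^2) (\<bar>t\<bar> * \<bar>Z x\<bar> ^ 3)\<bar> \<le> \<bar>t\<bar> * B^3"
  proof (rule cell_integral_bound[OF m])
    fix x assume x: "x \<in> grid_cell m k"
    have "\<bar>min (6 * (Z x)^2) (\<bar>t\<bar> * \<bar>Z x\<bar> ^ 3)\<bar> = min (6 * (Z x)^2) (\<bar>t\<bar> * \<bar>Z x\<bar> ^ 3)" by simp
    also have "\<dots> \<le> \<bar>t\<bar> * \<bar>Z x\<bar> ^ 3" by simp
    also have "\<dots> \<le> \<bar>t\<bar> * B ^ 3"
      by (intro mult_left_mono power_mono Zb[OF x]) auto
    finally show "\<bar>min (6 * (Z x)^2) (\<bar>t\<bar> * \<bar>Z x\<bar> ^ 3)\<bar> \<le> \<bar>t\<bar> * B^3" .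
  qed simp
  then have "t^2 / 6 * (LINT x|?\<nu>. min (6 * (Z x)^2) (\<bar>t\<bar> * \<bar>Z x\<bar> ^ 3)) \<le> t^2 / 6 * (\<bar>t\<bar> * B^3)"
    by (intro mult_left_mono) auto
  also have "\<dots> = \<bar>t\<bar>^3 * B^3 / 6" by (simp add: power2_eq_square power3_eq_cube abs_mult_self_eq)
  finally have a1: "cmod (char (distr ?\<nu> borel Z) t - complex_of_real (1 - t^2 * v / 2)) \<le> \<bar>t\<bar>^3 * B^3 / 6"
    using approx by linarith
  have v0: "0 \<le> v" unfolding v_def using Vc_bound(1)[OF m k] by simp
  have vB: "v \<le> B^2"
  proof -
    have "v \<le> (Gm * real CARD('n) / real m)^2 / s^2"
      unfolding v_def using Vc_bound(2)[OF m k] s by (intro divide_right_mono) auto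
    also have "\<dots> = B^2" unfolding B_def by (simp add: power_divide power_mult_distrib)
    finally show ?thesis .
  qed
  have y0: "0 \<le> t^2 * v / 2" using v0 by simp
  have "\<bar>exp (- (t^2 * v / 2)) - (1 - t^2 * v / 2)\<bar> \<le> (t^2 * v / 2)^2"
    by (rule exp_minus_approx[OF y0])
  also have "\<dots> \<le> (t^2 * B^2 / 2)^2"
    using vB v0 by (intro power_mono) (auto intro: mult_left_mono divide_right_mono)
  also have "\<dots> = (t^2/2)^2 * B^4" by (simp add: power2_eq_square power4_eq_xxxx field_simps)
  finally have a2': "\<bar>exp (- (t^2 * v / 2)) - (1 - t^2 * v / 2)\<bar> \<le> (t^2/2)^2 * B^4" .
  have "cmod (complex_of_real (1 - t^2 * v / 2) - complex_of_real (exp (- (t^2 * v / 2)))) =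
      \<bar>(1 - t^2 * v / 2) - exp (- (t^2 * v / 2))\<bar>"
    by (simp only: of_real_diff[symmetric] norm_of_real)
  then have a2: "cmod (complex_of_real (1 - t^2 * v / 2) - complex_of_real (exp (- (t^2 * v / 2)))) \<le> (t^2/2)^2 * B^4"
    using a2' by (simp add: abs_minus_commute)
  show ?thesis unfolding v_def[symmetric] by (rule norm_diff_triangle_le[OF a1 a2])
qed

end

context C1_cube
begin

lemma char_bound:
  assumes \<sigma>pos: "\<sigma>2 > 0" and \<mu>def: "\<mu> = integral unit_cube f" and m: "m > 0"
  shows "norm (char (distr (strat_sample m) borel
            (\<lambda>U. (strat_estimate f m U - \<mu>) / (sqrt \<sigma>2 * real (m ^ CARD('n)) powr (- 1/2 - 1 / real CARD('n))))) t
          - complex_of_real (exp (- (t^2/2) * (W m / \<sigma>2))))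
    \<le> real m ^ CARD('n) * (\<bar>t\<bar>^3 * (Gm * real CARD('n) / (sqrt \<sigma>2 * sqrt (real m ^ CARD('n))))^3 / 6
        + (t^2/2)^2 * (Gm * real CARD('n) / (sqrt \<sigma>2 * sqrt (real m ^ CARD('n))))^4)"
proof -
  let ?d = "CARD('n)"
  let ?N = "real m ^ ?d"
  let ?K = "grid_index m :: ('n \<Rightarrow> nat) set"
  let ?\<nu> = "\<lambda>k. uniform_measure lborel (grid_cell m k)"
  define D where "D = sqrt \<sigma>2 * real (m ^ ?d) powr (- 1/2 - 1 / real ?d)"
  define Bm where "Bm = Gm * real ?d / (sqrt \<sigma>2 * sqrt ?N)"
  have mp: "real m > 0" using m by simp
  have Npos: "?N > 0" using mp by simp
  have sNpos: "sqrt ?N > 0" using Npos by simp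
  have sN2: "sqrt ?N * sqrt ?N = ?N" using Npos by simp
  have sigpos: "sqrt \<sigma>2 > 0" using \<sigma>pos by simp
  define s where "s = sqrt \<sigma>2 * sqrt ?N / real m"
  have spos: "s > 0" unfolding s_def using sigpos sNpos mp by simp
  have Deq: "D = sqrt \<sigma>2 / (sqrt ?N * real m)"
    unfolding D_def using powr_D_eq[OF m, of ?d] by simp
  have ND: "?N * D = s"
  proof -
    have "?N * D = (sqrt ?N * sqrt ?N) * sqrt \<sigma>2 / (sqrt ?N * real m)" unfolding Deq sN2 by simp
    also have "\<dots> = s" unfolding s_def using sNpos mp by (simp add: field_simps)
    finally show ?thesis .
  qed
  define Z where "Z k x = (g x - \<mu>c m k) / s" for k x
  have mu_sum: "\<mu> = (\<Sum>k\<in>?K. \<mu>c m k) / ?N"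
  proof -
    have "\<mu> = (\<Sum>k\<in>?K. integral (grid_cell m k) f)" unfolding \<mu>def by (rule cube_additivity[OF cont_f m])
    also have "\<dots> = (\<Sum>k\<in>?K. \<mu>c m k / ?N)"
      by (rule sum.cong[OF refl]) (use Npos \<mu>c_henstock[OF m] in simp)
    finally show ?thesis by (simp add: sum_divide_distrib)
  qed
  have S: "(strat_estimate f m U - \<mu>) / D = (\<Sum>k\<in>?K. Z k (U k))" for U
  proof -
    have est: "strat_estimate f m U = (\<Sum>k\<in>?K. g (U k)) / ?N"
      unfolding strat_estimate_def g_def by simp
    have "(strat_estimate f m U - \<mu>) / D = (\<Sum>k\<in>?K. g (U k) - \<mu>c m k) / (?N * D)"
      unfolding est mu_sum sum_subtractf by (simp add: diff_divide_distrib)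
    also have "\<dots> = (\<Sum>k\<in>?K. Z k (U k))" unfolding ND Z_def by (simp add: sum_divide_distrib)
    finally show ?thesis .
  qed
  have Zm: "Z k \<in> borel_measurable (?\<nu> k)" for k
    unfolding borel_measurable_uniform_lborel Z_def by measurable
  have ps: "prob_space (?\<nu> k)" for k by (rule prob_space_cell[OF m])
  have "char (distr (strat_sample m) borel (\<lambda>U. (strat_estimate f m U - \<mu>) / D)) t =
      char (distr (Pi\<^sub>M ?K ?\<nu>) borel (\<lambda>U. \<Sum>k\<in>?K. Z k (U k))) t"
    unfolding S strat_sample_def ..
  also have "\<dots> = (\<Prod>k\<in>?K. char (distr (?\<nu> k) borel (Z k)) t)"
    by (rule char_distr_PiM_sum[OF finite_grid_index ps Zm])
  finally have phi: "char (distr (strat_sample m) borel (\<lambda>U. (strat_estimate f m U - \<mu>) / D)) t =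
      (\<Prod>k\<in>?K. char (distr (?\<nu> k) borel (Z k)) t)" .
  define e where "e k = complex_of_real (exp (- (t^2 * (Vc m k / s^2) / 2)))" for k
  have s2: "s^2 = \<sigma>2 * ?N / (real m)^2"
    unfolding s_def using \<sigma>pos Npos by (simp add: power_divide power_mult_distrib)
  have prode: "(\<Prod>k\<in>?K. e k) = complex_of_real (exp (- (t^2/2) * (W m / \<sigma>2)))"
  proof -
    have "(\<Prod>k\<in>?K. e k) = complex_of_real (\<Prod>k\<in>?K. exp (- (t^2 * (Vc m k / s^2) / 2)))"
      unfolding e_def by simp
    also have "(\<Prod>k\<in>?K. exp (- (t^2 * (Vc m k / s^2) / 2))) = exp (\<Sum>k\<in>?K. - (t^2 * (Vc m k / s^2) / 2))"
      by (rule exp_sum[symmetric, OF finite_grid_index])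
    also have "(\<Sum>k\<in>?K. - (t^2 * (Vc m k / s^2) / 2)) = - (t^2/2) * ((\<Sum>k\<in>?K. Vc m k) / s^2)"
      by (simp add: sum_distrib_left sum_divide_distrib sum_negf mult.commute)
    also have "(\<Sum>k\<in>?K. Vc m k) / s^2 = W m / \<sigma>2"
      unfolding W_def s2 using \<sigma>pos Npos mp by (simp add: field_simps)
    finally show ?thesis .
  qed
  have Bm_eq: "Gm * real ?d / real m / s = Bm"
    unfolding Bm_def s_def using mp sigpos sNpos by (simp add: field_simps)
  have "norm ((\<Prod>k\<in>?K. char (distr (?\<nu> k) borel (Z k)) t) - (\<Prod>k\<in>?K. e k)) \<le>
      (\<Sum>k\<in>?K. norm (char (distr (?\<nu> k) borel (Z k)) t - e k))"
  proof (rule norm_prod_diff)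
    fix k assume "k \<in> ?K"
    have "real_distribution (distr (?\<nu> k) borel (Z k))"
      by (rule prob_space.real_distribution_distr[OF ps Zm])
    then show "norm (char (distr (?\<nu> k) borel (Z k)) t) \<le> 1" by (rule real_distribution.cmod_char_le_1)
  next
    fix k assume k: "k \<in> ?K"
    have "0 \<le> t^2 * (Vc m k / s^2) / 2" using Vc_bound(1)[OF m k] by simp
    then show "norm (e k) \<le> 1" unfolding e_def by simp
  qed
  also have "\<dots> \<le> (\<Sum>k\<in>?K. \<bar>t\<bar>^3 * Bm^3 / 6 + (t^2/2)^2 * Bm^4)"
  proof (rule sum_mono)
    fix k assume k: "k \<in> ?K"
    show "norm (char (distr (?\<nu> k) borel (Z k)) t - e k) \<le> \<bar>t\<bar>^3 * Bm^3 / 6 + (t^2/2)^2 * Bm^4"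
      using Z_facts[OF m k spos, of t] unfolding Bm_eq e_def Z_def[abs_def] .
  qed
  also have "\<dots> = ?N * (\<bar>t\<bar>^3 * Bm^3 / 6 + (t^2/2)^2 * Bm^4)"
    by (simp add: card_grid_index)
  finally show ?thesis
    unfolding D_def[symmetric] phi prode Bm_def .
qed

end

theorem theorem1:
  fixes f :: "real ^ 'n::finite \<Rightarrow> real"
    and gradf :: "real ^ 'n \<Rightarrow> real ^ 'n"
    and \<mu> \<sigma>2 :: real
  assumes deriv: "\<And>x. x \<in> unit_cube \<Longrightarrow>
                     (f has_derivative (\<lambda>h. gradf x \<bullet> h)) (at x within unit_cube)"
    and cont_grad: "continuous_on unit_cube gradf"
    and mu_def: "\<mu> = integral unit_cube f"
    and sigma2_def: "\<sigma>2 = (1/12) * integral unit_cube (\<lambda>x. (norm (gradf x))\<^sup>2)"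
    and pos: "\<sigma>2 > 0"
  shows "weak_conv_m
           (\<lambda>m. distr (strat_sample m) borel
              (\<lambda>U. (strat_estimate f m U - \<mu>) /
                   (sqrt \<sigma>2 * real (m ^ CARD('n)) powr (- 1/2 - 1 / real CARD('n)))))
           std_normal_distribution"
proof -
  interpret C1_cube f gradf by unfold_locales (use deriv cont_grad in auto)
  let ?d = "CARD('n)"
  define D where "D m = sqrt \<sigma>2 * real (m ^ ?d) powr (- 1/2 - 1 / real ?d)" for m :: nat
  define \<phi> where "\<phi> m = char (distr (strat_sample m) borel (\<lambda>U. (strat_estimate f m U - \<mu>) / D m))" for m
  show ?thesis
  proof (rule levy_continuity)
    fix m :: nat
    show "real_distribution (distr (strat_sample m) borel
              (\<lambda>U. (strat_estimate f m U - \<mu>) / (sqrt \<sigma>2 * real (m ^ ?d) powr (- 1/2 - 1 / real ?d))))"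
      by (rule prob_space.real_distribution_distr[OF prob_strat strat_measurable])
  next
    show "real_distribution std_normal_distribution" by (rule real_dist_normal_dist)
  next
    fix t :: real
    define C where "C = Gm * real ?d / sqrt \<sigma>2"
    define err where "err m = real m ^ ?d * (\<bar>t\<bar>^3 * (Gm * real ?d / (sqrt \<sigma>2 * sqrt (real m ^ ?d)))^3 / 6
        + (t^2/2)^2 * (Gm * real ?d / (sqrt \<sigma>2 * sqrt (real m ^ ?d)))^4)" for m :: nat
    define E where "E m = complex_of_real (exp (- (t^2/2) * (W m / \<sigma>2)))" for m
    have dpos: "?d > 0" by simp
    have Wlim: "(\<lambda>m. W m / \<sigma>2) \<longlonglongrightarrow> 1"
    proof -
      have "(\<lambda>m. W m / \<sigma>2) \<longlonglongrightarrow> \<sigma>2 / \<sigma>2"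
        by (intro tendsto_divide tendsto_const W_conv[folded sigma2_def]) (use pos in auto)
      then show ?thesis using pos by simp
    qed
    have Elim: "E \<longlonglongrightarrow> complex_of_real (exp (- (t^2/2) * 1))"
      unfolding E_def by (intro tendsto_intros Wlim)
    have err_eq: "err m = (\<bar>t\<bar>^3 * C^3 / 6) * (1 / sqrt (real m ^ ?d)) + ((t^2/2)^2 * C^4) * (1 / (real m ^ ?d))"
      if m: "m > 0" for m :: nat
    proof -
      let ?N = "real m ^ ?d"
      have Npos: "?N > 0" using m by simp
      have sN: "sqrt ?N * sqrt ?N = ?N" using Npos by simp
      have sNpos: "sqrt ?N > 0" using Npos by simp
      have a: "Gm * real ?d / (sqrt \<sigma>2 * sqrt ?N) = C / sqrt ?N" unfolding C_def by simp
      have b: "?N * (C / sqrt ?N)^3 = C^3 * (1 / sqrt ?N)"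
      proof -
        have "?N * (C / sqrt ?N)^3 = (sqrt ?N * sqrt ?N) * C^3 / (sqrt ?N * sqrt ?N * sqrt ?N)"
          unfolding sN by (simp add: power_divide power3_eq_cube)
        also have "\<dots> = C^3 * (1 / sqrt ?N)" using sNpos by (simp add: field_simps)
        finally show ?thesis .
      qed
      have c: "?N * (C / sqrt ?N)^4 = C^4 * (1 / ?N)"
      proof -
        have "(sqrt ?N)^4 = ?N * ?N" using sN by (simp add: power4_eq_xxxx mult.assoc[symmetric])
        then have "?N * (C / sqrt ?N)^4 = ?N * C^4 / (?N * ?N)" by (simp add: power_divide)
        also have "\<dots> = C^4 * (1 / ?N)" using Npos by (simp add: field_simps)
        finally show ?thesis .
      qed
      have "err m = \<bar>t\<bar>^3 / 6 * (?N * (C / sqrt ?N)^3) + (t^2/2)^2 * (?N * (C / sqrt ?N)^4)"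
        unfolding err_def a by (simp add: algebra_simps)
      also have "\<dots> = (\<bar>t\<bar>^3 * C^3 / 6) * (1 / sqrt ?N) + ((t^2/2)^2 * C^4) * (1 / ?N)"
        unfolding b c by simp
      finally show ?thesis .
    qed
    have errlim: "err \<longlonglongrightarrow> 0"
    proof -
      have "(\<lambda>m. (\<bar>t\<bar>^3 * C^3 / 6) * (1 / sqrt (real m ^ ?d)) + ((t^2/2)^2 * C^4) * (1 / (real m ^ ?d)))
          \<longlonglongrightarrow> (\<bar>t\<bar>^3 * C^3 / 6) * 0 + ((t^2/2)^2 * C^4) * 0"
        by (intro tendsto_intros inv_sqrt_pow_tendsto[OF dpos] inv_pow_tendsto[OF dpos])
      then have lim: "(\<lambda>m. (\<bar>t\<bar>^3 * C^3 / 6) * (1 / sqrt (real m ^ ?d)) + ((t^2/2)^2 * C^4) * (1 / (real m ^ ?d)))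
          \<longlonglongrightarrow> 0" by simp
      have ev: "\<forall>\<^sub>F m in sequentially. (\<bar>t\<bar>^3 * C^3 / 6) * (1 / sqrt (real m ^ ?d)) + ((t^2/2)^2 * C^4) * (1 / (real m ^ ?d)) = err m"
        using eventually_gt_at_top[of "0::nat"] by eventually_elim (simp add: err_eq)
      show ?thesis using lim unfolding tendsto_cong[OF ev] .
    qed
    have bound: "\<forall>\<^sub>F m in sequentially. norm (\<phi> m t - E m) \<le> err m"
      using eventually_gt_at_top[of "0::nat"]
    proof eventually_elim
      case (elim m)
      show ?case unfolding \<phi>_def E_def err_def D_def by (rule char_bound[OF pos mu_def elim])
    qed
    have "(\<lambda>m. \<phi> m t - E m) \<longlonglongrightarrow> 0" by (rule Lim_null_comparison[OF bound errlim])
    then have "(\<lambda>m. (\<phi> m t - E m) + E m) \<longlonglongrightarrow> 0 + complex_of_real (exp (- (t^2/2) * 1))"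
      by (intro tendsto_add Elim)
    then have "(\<lambda>m. \<phi> m t) \<longlonglongrightarrow> char std_normal_distribution t"
      by (simp add: char_std_normal_distribution)
    then show "(\<lambda>m. char (distr (strat_sample m) borel
              (\<lambda>U. (strat_estimate f m U - \<mu>) / (sqrt \<sigma>2 * real (m ^ ?d) powr (- 1/2 - 1 / real ?d)))) t)
          \<longlonglongrightarrow> char std_normal_distribution t"
      unfolding \<phi>_def D_def .
  qed
qed

end
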